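(* For $n=5$ leaves, any two quartet-matched pairs of binary trees $T_1,T_2$ and $T_3,T_4$ satisfy $\{T_1,T_2\}=\{T_3,T_4\}$. For $n=6$ leaves, every quartet-matched pair with $\{T_1,T_2\}\neq\{T_3,T_4\}$ is equivalent, up to the action of the symmetric group $\mathfrak{S}_6$ on leaf labels, to the pairs $T_1=\{12|3456,\,123|456,\,1234|56\}$, $T_2=\{13|2456,\,123|456,\,1235|46\}$, $T_3=\{13|2456,\,123|456,\,1234|56\}$, $T_4=\{12|3456,\,123|456,\,1235|46\}$.
   Context: Trees are unrooted binary trees with leaves labelled bijectively by $[n]$, described by their sets of nontrivial splits. For $Q\subseteq[n]$, $T|_Q$ denotes the induced subtree on leaf set $Q$. For trees $T_i,T_j$, $\mathcal{Q}(T_i,T_j)$ denotes the multiset of all quartet trees $T_i|_Q$ and $T_j|_Q$ for all four-element $Q\subseteq[n]$. Two pairs of trees $T_1,T_2$ and $T_3,T_4$ are quartet-matched if $\mathcal{Q}(T_1,T_2)=\mathcal{Q}(T_3,T_4)$. *)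

theory Defs
  imports "HOL-Library.Multiset" "HOL-Combinatorics.Permutations"
begin

text \<open>Leaves are labelled by [n] = {1..n}. A split of a leaf set L is the
unordered bipartition {A, L - A}; a tree is described by its set of nontrivial splits.\<close>

definition bipart :: "nat set \<Rightarrow> nat set \<Rightarrow> nat set set" where
  "bipart L A = {A, L - A}"

definition nontrivial_split :: "nat set \<Rightarrow> nat set set \<Rightarrow> bool" where
  "nontrivial_split L S \<longleftrightarrow>
     (\<exists>A. A \<subseteq> L \<and> S = bipart L A \<and> 2 \<le> card A \<and> 2 \<le> card (L - A))"

definition compatible_splits :: "nat set set \<Rightarrow> nat set set \<Rightarrow> bool" where
  "compatible_splits S1 S2 \<longleftrightarrow> (\<exists>A\<in>S1. \<exists>B\<in>S2. A \<inter> B = {})"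

definition binary_tree :: "nat \<Rightarrow> nat set set set \<Rightarrow> bool" where
  "binary_tree n T \<longleftrightarrow>
     (\<forall>S\<in>T. nontrivial_split {1..n} S) \<and>
     (\<forall>S1\<in>T. \<forall>S2\<in>T. compatible_splits S1 S2) \<and>
     card T = n - 3"

definition restrict_tree :: "nat set set set \<Rightarrow> nat set \<Rightarrow> nat set set set" where
  "restrict_tree T Q =
     {{A \<inter> Q, B \<inter> Q} | A B. {A, B} \<in> T \<and> 2 \<le> card (A \<inter> Q) \<and> 2 \<le> card (B \<inter> Q)}"

definition quartet_multiset ::
  "nat \<Rightarrow> nat set set set \<Rightarrow> nat set set set \<Rightarrow> (nat set \<times> nat set set set) multiset" where
  "quartet_multiset n Ti Tj =
     (\<Sum>Q\<in>{Q. Q \<subseteq> {1..n} \<and> card Q = 4}. {#(Q, restrict_tree Ti Q), (Q, restrict_tree Tj Q)#})"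

definition quartet_matched ::
  "nat \<Rightarrow> nat set set set \<Rightarrow> nat set set set \<Rightarrow> nat set set set \<Rightarrow> nat set set set \<Rightarrow> bool" where
  "quartet_matched n T1 T2 T3 T4 \<longleftrightarrow> quartet_multiset n T1 T2 = quartet_multiset n T3 T4"

definition relabel :: "(nat \<Rightarrow> nat) \<Rightarrow> nat set set set \<Rightarrow> nat set set set" where
  "relabel \<sigma> T = (\<lambda>S. (\<lambda>A. \<sigma> ` A) ` S) ` T"

definition E1 :: "nat set set set" where
  "E1 = {bipart {1..6} {1,2}, bipart {1..6} {1,2,3}, bipart {1..6} {1,2,3,4}}"
definition E2 :: "nat set set set" where
  "E2 = {bipart {1..6} {1,3}, bipart {1..6} {1,2,3}, bipart {1..6} {1,2,3,5}}"
definition E3 :: "nat set set set" where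
  "E3 = {bipart {1..6} {1,3}, bipart {1..6} {1,2,3}, bipart {1..6} {1,2,3,4}}"
definition E4 :: "nat set set set" where
  "E4 = {bipart {1..6} {1,2}, bipart {1..6} {1,2,3}, bipart {1..6} {1,2,3,5}}"

end

theory Submission
  imports Defs
begin


definition toS :: "nat list \<times> nat list \<Rightarrow> nat set set" where
  "toS p = {set (fst p), set (snd p)}"
definition toT :: "(nat list \<times> nat list) list \<Rightarrow> nat set set set" where
  "toT ps = toS ` set ps"

definition U :: "nat \<Rightarrow> nat list" where "U n = [1..<Suc n]"
definition cmpl :: "nat \<Rightarrow> nat list \<Rightarrow> nat list" where
  "cmpl n A = filter (\<lambda>x. x \<notin> set A) (U n)"
definition SPL :: "nat \<Rightarrow> (nat list \<times> nat list) list" where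
  "SPL n = map (\<lambda>A. (A, cmpl n A))
     (filter (\<lambda>A. 1 \<in> set A \<and> 2 \<le> length A \<and> 2 \<le> length (cmpl n A)) (subseqs (U n)))"

fun mem :: "nat \<Rightarrow> nat list \<Rightarrow> bool" where
  "mem x [] = False"
| "mem x (y#ys) = (if x = y then True else mem x ys)"

fun disj :: "nat list \<Rightarrow> nat list \<Rightarrow> bool" where
  "disj [] ys = True"
| "disj (x#xs) ys = (if mem x ys then False else disj xs ys)"

definition lcompat :: "nat list \<times> nat list \<Rightarrow> nat list \<times> nat list \<Rightarrow> bool" where
  "lcompat p q = (if disj (fst p) (fst q) then True else if disj (fst p) (snd q) then True
     else if disj (snd p) (fst q) then True else disj (snd p) (snd q))"

fun ncl :: "nat \<Rightarrow> (nat list \<times> nat list) list \<Rightarrow> (nat list \<times> nat list) list list" where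
  "ncl 0 xs = [[]]"
| "ncl (Suc k) [] = []"
| "ncl (Suc k) (x#xs) = map (Cons x) (filter (list_all (lcompat x)) (ncl k xs)) @ ncl (Suc k) xs"

definition TRL :: "nat \<Rightarrow> (nat list \<times> nat list) list list" where
  "TRL n = ncl (n - 3) (SPL n)"

fun filin :: "nat list \<Rightarrow> nat list \<Rightarrow> nat list" where
  "filin q [] = []"
| "filin q (x#xs) = (if mem x q then x # filin q xs else filin q xs)"

fun lrestr :: "(nat list \<times> nat list) list \<Rightarrow> nat list \<Rightarrow> (nat list \<times> nat list) list" where
  "lrestr [] q = []"
| "lrestr (p#ps) q = (if 2 \<le> length (filin q (fst p)) \<and> 2 \<le> length (filin q (snd p))
     then (filin q (fst p), filin q (snd p)) # lrestr ps q else lrestr ps q)"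

fun gcl :: "nat \<Rightarrow> (nat list \<times> nat list) list \<Rightarrow> nat list" where
  "gcl m [] = []"
| "gcl m (p#ps) = (if mem m (fst p) then fst p else []) @ (if mem m (snd p) then snd p else []) @ gcl m ps"

fun maxl :: "nat list \<Rightarrow> nat" where
  "maxl [] = 0"
| "maxl (x#xs) = max x (maxl xs)"

definition QL :: "nat \<Rightarrow> nat list list" where
  "QL n = filter (\<lambda>q. length q = 4) (subseqs (U n))"

fun vecf :: "(nat list \<times> nat list) list \<Rightarrow> nat list list \<Rightarrow> nat list" where
  "vecf t [] = []"
| "vecf t (q#qs) = maxl (gcl (hd q) (lrestr t q)) # vecf t qs"

definition vec :: "nat \<Rightarrow> (nat list \<times> nat list) list \<Rightarrow> nat list" where
  "vec n t = vecf t (QL n)"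

fun mc :: "nat list \<Rightarrow> nat list \<Rightarrow> nat list \<Rightarrow> nat list \<Rightarrow> bool" where
  "mc (a#as) (b#bs) (c#cs) (d#ds) = (if (c = a \<and> d = b) \<or> (c = b \<and> d = a) then mc as bs cs ds else False)"
| "mc [] [] [] [] = True"
| "mc _ _ _ _ = False"

fun sub :: "nat list \<Rightarrow> nat list \<Rightarrow> nat list \<Rightarrow> bool" where
  "sub (a#as) (b#bs) (c#cs) = (if c = a \<or> c = b then sub as bs cs else False)"
| "sub _ _ _ = True"

fun allb :: "(nat \<Rightarrow> bool) \<Rightarrow> nat \<Rightarrow> bool" where
  "allb P 0 = True"
| "allb P (Suc n) = (if P n then allb P n else False)"

definition maprel :: "(nat \<Rightarrow> nat) \<Rightarrow> (nat list \<times> nat list) list \<Rightarrow> (nat list \<times> nat list) list" where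
  "maprel s ps = map (\<lambda>p. (map s (fst p), map s (snd p))) ps"

definition tp :: "(nat \<times> nat) list \<Rightarrow> nat \<Rightarrow> nat" where
  "tp trs = foldr (\<lambda>ab f. transpose (fst ab) (snd ab) \<circ> f) trs id"

definition okperm :: "nat \<Rightarrow> (nat \<times> nat) list \<Rightarrow> bool" where
  "okperm n trs = list_all (\<lambda>ab. 1 \<le> fst ab \<and> fst ab \<le> n \<and> 1 \<le> snd ab \<and> snd ab \<le> n) trs"

definition cp :: "nat list \<times> nat list \<Rightarrow> nat list \<times> nat list" where
  "cp p = (if 1 \<in> set (fst p) then (sort (fst p), sort (snd p)) else (sort (snd p), sort (fst p)))"

definition seteq :: "(nat list \<times> nat list) list \<Rightarrow> (nat list \<times> nat list) list \<Rightarrow> bool" where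
  "seteq x y = (list_all (\<lambda>p. list_ex (\<lambda>q. cp p = cp q) y) x \<and> list_all (\<lambda>q. list_ex (\<lambda>p. cp p = cp q) x) y)"

lemma mem_iff: "mem x ys \<longleftrightarrow> x \<in> set ys"
  by (induction ys) auto

lemma disj_iff: "disj xs ys \<longleftrightarrow> set xs \<inter> set ys = {}"
  by (induction xs) (auto simp: mem_iff)

lemma compat_toS: "compatible_splits (toS p) (toS q) \<longleftrightarrow> lcompat p q"
  by (auto simp: compatible_splits_def toS_def lcompat_def disj_iff)

lemma setU: "set (U n) = {1..n}" by (auto simp: U_def)

lemma allb_iff: "allb P n \<longleftrightarrow> (\<forall>i<n. P i)"
  by (induction n) (auto simp: less_Suc_eq)

lemma allb_num: "allb P (numeral k) = (if P (pred_numeral k) then allb P (pred_numeral k) else False)"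
  by (rule allb.simps(2)[of P "pred_numeral k", unfolded numeral_eq_Suc[symmetric]])

declare allb.simps(2)[simp del]
lemma allb_Suc0 [simp]: "allb P (Suc 0) = P 0" by (simp add: allb.simps(2))
lemma allb_weak_cong [cong]: "n = m \<Longrightarrow> allb P n = allb P m" by simp

lemma SPL_distinct: "p \<in> set (SPL n) \<Longrightarrow> distinct (fst p) \<and> distinct (snd p)"
  unfolding SPL_def cmpl_def using subseqs_distinctD[of _ "U n"] by (auto simp: U_def)

lemma ncl_sub: "zs \<in> set (ncl k xs) \<Longrightarrow> set zs \<subseteq> set xs"
  by (induction k xs arbitrary: zs rule: ncl.induct) (simp, simp, fastforce)

lemma TRL_distinct: "t \<in> set (TRL n) \<Longrightarrow> p \<in> set t \<Longrightarrow> distinct (fst p) \<and> distinct (snd p)"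
  unfolding TRL_def using ncl_sub SPL_distinct by blast

lemma spl_complete:
  assumes ns: "nontrivial_split {1..n} S" and n1: "1 \<le> n"
  shows "S \<in> toS ` set (SPL n)"
proof -
  obtain A where A: "A \<subseteq> {1..n}" "S = bipart {1..n} A" "2 \<le> card A" "2 \<le> card ({1..n} - A)"
    using ns unfolding nontrivial_split_def by blast
  obtain B where B: "B \<subseteq> {1..n}" "1 \<in> B" "S = {B, {1..n} - B}" "2 \<le> card B" "2 \<le> card ({1..n}-B)"
  proof (cases "1 \<in> A")
    case True then show ?thesis using A that[of A] by (simp add: bipart_def)
  next
    case False
    have e: "{1..n} - ({1..n} - A) = A" using A(1) by auto
    have "1 \<in> {1..n} - A" using False n1 by auto
    then show ?thesis using that[of "{1..n} - A"] A e by (auto simp: bipart_def insert_commute)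
  qed
  obtain xs where xs: "xs \<in> set (subseqs (U n))" "set xs = B"
    using subset_subseqs[of B "U n"] setU B(1) by auto
  have dxs: "distinct xs" using subseqs_distinctD[OF xs(1)] by (simp add: U_def)
  have sc: "set (cmpl n xs) = {1..n} - B" using xs setU by (auto simp: cmpl_def)
  have "distinct (cmpl n xs)" by (simp add: cmpl_def U_def)
  then have lc: "length (cmpl n xs) = card ({1..n} - B)" using sc distinct_card by metis
  have lx: "length xs = card B" using dxs xs(2) distinct_card by metis
  have "(xs, cmpl n xs) \<in> set (SPL n)" unfolding SPL_def using xs B lc lx by auto
  moreover have "S = toS (xs, cmpl n xs)" using B xs sc by (simp add: toS_def)
  ultimately show ?thesis by blast
qed

lemma ncl_complete:
  "finite I \<Longrightarrow> I \<subseteq> set xs \<Longrightarrow> card I = k \<Longrightarrow> (\<forall>p\<in>I. \<forall>q\<in>I. lcompat p q)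
   \<Longrightarrow> \<exists>zs\<in>set (ncl k xs). set zs = I"
proof (induction xs arbitrary: k I)
  case Nil
  then show ?case by (cases k) auto
next
  case (Cons x xs)
  show ?case
  proof (cases k)
    case 0
    then show ?thesis using Cons.prems by auto
  next
    case (Suc k')
    show ?thesis
    proof (cases "x \<in> I")
      case True
      have "finite (I - {x})" "I - {x} \<subseteq> set xs" "card (I - {x}) = k'"
        "\<forall>p\<in>I - {x}. \<forall>q\<in>I - {x}. lcompat p q"
        using Cons.prems True Suc by auto
      then obtain zs where zs: "zs \<in> set (ncl k' xs)" "set zs = I - {x}"
        using Cons.IH[of "I - {x}" k'] by blast
      have "list_all (lcompat x) zs" using zs(2) Cons.prems(4) True by (auto simp: list_all_iff)
      then have "x # zs \<in> set (ncl k (x # xs))" using zs(1) Suc by auto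
      moreover have "set (x # zs) = I" using zs(2) True by auto
      ultimately show ?thesis by blast
    next
      case False
      then have "I \<subseteq> set xs" using Cons.prems by auto
      then obtain zs where "zs \<in> set (ncl k xs)" "set zs = I" using Cons.IH[of I k] Cons.prems by blast
      then show ?thesis using Suc by auto
    qed
  qed
qed

lemma bt_enum:
  assumes bt: "binary_tree n T" and n1: "1 \<le> n"
  shows "\<exists>zs\<in>set (TRL n). T = toT zs"
proof -
  have ns: "\<forall>S\<in>T. nontrivial_split {1..n} S" and cp: "\<forall>S1\<in>T. \<forall>S2\<in>T. compatible_splits S1 S2"
    and cT: "card T = n - 3" using bt unfolding binary_tree_def by auto
  have sub: "T \<subseteq> toS ` set (SPL n)" using ns spl_complete n1 by blast
  define h where "h = (\<lambda>S. SOME p. p \<in> set (SPL n) \<and> toS p = S)"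
  have h: "h S \<in> set (SPL n) \<and> toS (h S) = S" if "S \<in> T" for S
  proof -
    have "\<exists>p. p \<in> set (SPL n) \<and> toS p = S" using sub that by blast
    then show ?thesis unfolding h_def by (rule someI_ex)
  qed
  have inj: "inj_on h T" by (rule inj_on_inverseI[where g = toS]) (use h in auto)
  have fin: "finite T" using sub finite_subset by blast
  have "\<exists>zs\<in>set (ncl (n-3) (SPL n)). set zs = h ` T"
  proof (rule ncl_complete)
    show "finite (h ` T)" using fin by simp
    show "h ` T \<subseteq> set (SPL n)" using h by auto
    show "card (h ` T) = n - 3" using card_image[OF inj] cT by simp
    show "\<forall>p\<in>h ` T. \<forall>q\<in>h ` T. lcompat p q"
    proof (intro ballI)
      fix p q assume "p \<in> h ` T" "q \<in> h ` T"
      then obtain S1 S2 where "S1 \<in> T" "S2 \<in> T" "p = h S1" "q = h S2" by blast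
      then show "lcompat p q" using cp h compat_toS by metis
    qed
  qed
  then obtain zs where zs: "zs \<in> set (TRL n)" "set zs = h ` T" unfolding TRL_def by blast
  have "toT zs = T" unfolding toT_def zs(2) image_image using h by (auto simp: image_iff)
  then show ?thesis using zs by auto
qed

lemma filin_set: "set (filin q a) = set a \<inter> set q"
  by (induction a) (auto simp: mem_iff)

lemma filin_distinct: "distinct a \<Longrightarrow> distinct (filin q a)"
  by (induction a) (auto simp: filin_set)

lemma filin_len: "distinct a \<Longrightarrow> length (filin q a) = card (set a \<inter> set q)"
  using distinct_card[OF filin_distinct] filin_set by metis

lemma lrestr_set: "(\<forall>p\<in>set ps. distinct (fst p) \<and> distinct (snd p)) \<Longrightarrow>
  set (lrestr ps q) = (\<lambda>p. (filin q (fst p), filin q (snd p))) `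
     {p\<in>set ps. 2 \<le> card (set (fst p) \<inter> set q) \<and> 2 \<le> card (set (snd p) \<inter> set q)}"
  by (induction ps) (auto simp: filin_len)

lemma restr_toT:
  assumes d: "\<forall>p\<in>set ps. distinct (fst p) \<and> distinct (snd p)"
  shows "restrict_tree (toT ps) (set q) = toT (lrestr ps q)"
proof (rule set_eqI, rule iffI)
  fix x assume "x \<in> restrict_tree (toT ps) (set q)"
  then obtain A B where AB: "x = {A \<inter> set q, B \<inter> set q}" "{A, B} \<in> toT ps"
    "2 \<le> card (A \<inter> set q)" "2 \<le> card (B \<inter> set q)"
    unfolding restrict_tree_def by blast
  from AB(2) obtain p where p0: "p \<in> set ps" "{A, B} = {set (fst p), set (snd p)}"
    unfolding toT_def toS_def by blast
  note p = p0 AB(3,4,1)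
  have "x = {set (fst p) \<inter> set q, set (snd p) \<inter> set q}
     \<and> 2 \<le> card (set (fst p) \<inter> set q) \<and> 2 \<le> card (set (snd p) \<inter> set q)"
    using p by (auto simp: doubleton_eq_iff insert_commute)
  then have "toS (filin q (fst p), filin q (snd p)) = x" by (simp add: toS_def filin_set)
  moreover have "(filin q (fst p), filin q (snd p)) \<in> set (lrestr ps q)"
    using lrestr_set[OF d] p \<open>x = _ \<and> _\<close> by auto
  ultimately show "x \<in> toT (lrestr ps q)" unfolding toT_def by (metis image_eqI)
next
  fix x assume "x \<in> toT (lrestr ps q)"
  then obtain p where p: "p \<in> set ps" "2 \<le> card (set (fst p) \<inter> set q)" "2 \<le> card (set (snd p) \<inter> set q)"
     "x = {set (fst p) \<inter> set q, set (snd p) \<inter> set q}"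
    unfolding toT_def lrestr_set[OF d] toS_def by (auto simp: filin_set)
  then show "x \<in> restrict_tree (toT ps) (set q)"
    unfolding restrict_tree_def toT_def toS_def by blast
qed

definition G :: "nat \<Rightarrow> nat set set set \<Rightarrow> nat" where
  "G m R = (if \<Union>{A. A \<in> \<Union>R \<and> m \<in> A} = {} then 0 else Max (\<Union>{A. A \<in> \<Union>R \<and> m \<in> A}))"

lemma maxl_Max: "maxl l = (if set l = {} then 0 else Max (set l))"
  by (induction l) (auto simp: Max_insert2 max_def)

lemma gcl_set: "x \<in> set (gcl m ps) \<longleftrightarrow>
  (\<exists>p\<in>set ps. (m \<in> set (fst p) \<and> x \<in> set (fst p)) \<or> (m \<in> set (snd p) \<and> x \<in> set (snd p)))"
  by (induction ps) (auto simp: mem_iff)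

lemma G_toT: "G m (toT ps) = maxl (gcl m ps)"
proof -
  have "\<Union>{A. A \<in> \<Union>(toT ps) \<and> m \<in> A} = set (gcl m ps)"
    by (rule set_eqI) (simp add: gcl_set toT_def toS_def, blast)
  then show ?thesis unfolding G_def maxl_Max by simp
qed

lemma QL_prop: "q \<in> set (QL n) \<Longrightarrow> set q \<subseteq> {1..n} \<and> card (set q) = 4"
proof -
  assume q: "q \<in> set (QL n)"
  then have q1: "q \<in> set (subseqs (U n))" "length q = 4" by (auto simp: QL_def)
  have "set q \<in> Pow (set (U n))" unfolding subseqs_powset[symmetric] using q1(1) by (rule imageI)
  moreover have "distinct q" using subseqs_distinctD[OF q1(1)] by (simp add: U_def)
  ultimately show ?thesis using q1(2) setU distinct_card by fastforce
qed

definition V :: "nat \<Rightarrow> nat set set set \<Rightarrow> nat list" where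
  "V n T = map (\<lambda>q. G (hd q) (restrict_tree T (set q))) (QL n)"

lemma vecf_map: "vecf t qs = map (\<lambda>q. maxl (gcl (hd q) (lrestr t q))) qs"
  by (induction qs) auto

lemma V_toT: "\<forall>p\<in>set t. distinct (fst p) \<and> distinct (snd p) \<Longrightarrow> V n (toT t) = vec n t"
  by (simp add: V_def vec_def vecf_map restr_toT G_toT)

definition pq :: "nat \<Rightarrow> nat set set set \<Rightarrow> nat set set set \<Rightarrow> nat set set set \<Rightarrow> nat set set set \<Rightarrow> bool" where
  "pq n T1 T2 T3 T4 \<longleftrightarrow> (\<forall>Q. Q \<subseteq> {1..n} \<and> card Q = 4 \<longrightarrow>
     {#restrict_tree T1 Q, restrict_tree T2 Q#} = {#restrict_tree T3 Q, restrict_tree T4 Q#})"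

lemma qm_count:
  assumes "Q \<subseteq> {1..n}" "card Q = 4"
  shows "count (quartet_multiset n T1 T2) (Q,X) = count {#restrict_tree T1 Q, restrict_tree T2 Q#} X"
proof -
  have fin: "finite {Q. Q \<subseteq> {1..n} \<and> card Q = 4}" by (rule finite_subset[of _ "Pow {1..n}"]) auto
  have "count (quartet_multiset n T1 T2) (Q,X) = (\<Sum>Q'\<in>{Q. Q \<subseteq> {1..n} \<and> card Q = 4}.
      if Q' = Q then count {#restrict_tree T1 Q, restrict_tree T2 Q#} X else 0)"
    unfolding quartet_multiset_def count_sum by (rule sum.cong) auto
  also have "\<dots> = count {#restrict_tree T1 Q, restrict_tree T2 Q#} X"
    using fin assms by (simp add: sum.delta')
  finally show ?thesis .
qed

lemma matched_pq: "quartet_matched n T1 T2 T3 T4 \<Longrightarrow> pq n T1 T2 T3 T4"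
  unfolding pq_def
proof (intro allI impI)
  fix Q assume m: "quartet_matched n T1 T2 T3 T4" and Q: "Q \<subseteq> {1..n} \<and> card Q = 4"
  show "{#restrict_tree T1 Q, restrict_tree T2 Q#} = {#restrict_tree T3 Q, restrict_tree T4 Q#}"
  proof (rule multiset_eqI)
    fix X
    have "count {#restrict_tree T1 Q, restrict_tree T2 Q#} X = count (quartet_multiset n T1 T2) (Q,X)"
      using qm_count Q by metis
    also have "\<dots> = count (quartet_multiset n T3 T4) (Q,X)" using m unfolding quartet_matched_def by simp
    also have "\<dots> = count {#restrict_tree T3 Q, restrict_tree T4 Q#} X" using qm_count Q by metis
    finally show "count {#restrict_tree T1 Q, restrict_tree T2 Q#} X = count {#restrict_tree T3 Q, restrict_tree T4 Q#} X" .
  qed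
qed

lemma mc_sub: "mc a b c d \<Longrightarrow> sub a b c"
  by (induction a b c d rule: mc.induct) (auto split: if_splits)

lemma mset2_eq: "{#a, b#} = {#c, d#} \<longleftrightarrow> (c = a \<and> d = b) \<or> (c = b \<and> d = a)"
  by (auto simp: add_eq_conv_ex)

lemma mc_map: "(\<forall>q\<in>set qs. {#f1 q, f2 q#} = {#f3 q, f4 q#}) \<Longrightarrow>
   mc (map f1 qs) (map f2 qs) (map f3 qs) (map f4 qs)"
  by (induction qs) (auto simp: mset2_eq)

lemma pq_mc: "pq n T1 T2 T3 T4 \<Longrightarrow> mc (V n T1) (V n T2) (V n T3) (V n T4)"
  unfolding V_def
proof (rule mc_map, intro ballI)
  fix q assume pq: "pq n T1 T2 T3 T4" and q: "q \<in> set (QL n)"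
  have "{#restrict_tree T1 (set q), restrict_tree T2 (set q)#} = {#restrict_tree T3 (set q), restrict_tree T4 (set q)#}"
    using pq QL_prop[OF q] unfolding pq_def by blast
  then have "image_mset (G (hd q)) {#restrict_tree T1 (set q), restrict_tree T2 (set q)#}
     = image_mset (G (hd q)) {#restrict_tree T3 (set q), restrict_tree T4 (set q)#}" by simp
  then show "{#G (hd q) (restrict_tree T1 (set q)), G (hd q) (restrict_tree T2 (set q))#} =
             {#G (hd q) (restrict_tree T3 (set q)), G (hd q) (restrict_tree T4 (set q))#}" by simp
qed

lemma relabel_comp: "relabel (\<sigma> \<circ> \<tau>) T = relabel \<sigma> (relabel \<tau> T)"
  unfolding relabel_def by (simp add: image_image image_comp)

lemma relabel_toT: "relabel \<sigma> (toT ps) = toT (maprel \<sigma> ps)"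
  unfolding relabel_def toT_def maprel_def by (simp add: image_image toS_def)

lemma inj_img: "inj f \<Longrightarrow> inj (image f)"
  by (simp add: inj_def inj_image_eq_iff)

lemma relabel_eq_img: "relabel \<sigma> T = image (image (image \<sigma>)) T"
  unfolding relabel_def by simp

lemma relabel_inj: "inj \<sigma> \<Longrightarrow> inj (relabel \<sigma>)"
  unfolding relabel_eq_img[abs_def] by (intro inj_img)

lemma pair_inj: "inj F \<Longrightarrow> {F a, F b} = {F c, F d} \<Longrightarrow> {a, b} = {c, d}"
  using inj_image_eq_iff[of F "{a,b}" "{c,d}"] by simp

lemma relabel_binary:
  assumes p: "\<sigma> permutes {1..n}" and bt: "binary_tree n T"
  shows "binary_tree n (relabel \<sigma> T)"
proof -
  let ?L = "{1..n::nat}"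
  have inj: "inj \<sigma>" using permutes_inj[OF p] .
  have img: "\<sigma> ` ?L = ?L" using permutes_image[OF p] .
  have ns: "nontrivial_split ?L (image (image \<sigma>) S)" if S: "S \<in> T" for S
  proof -
    obtain A where A: "A \<subseteq> ?L" "S = bipart ?L A" "2 \<le> card A" "2 \<le> card (?L - A)"
      using bt S unfolding binary_tree_def nontrivial_split_def by blast
    have d: "\<sigma> ` (?L - A) = ?L - \<sigma> ` A" using image_set_diff[OF inj] img by metis
    have c1: "card (\<sigma> ` A) = card A" using card_image inj by (metis inj_on_subset subset_UNIV)
    have c2: "card (\<sigma> ` (?L - A)) = card (?L - A)" using card_image inj by (metis inj_on_subset subset_UNIV)
    have "image (image \<sigma>) S = bipart ?L (\<sigma> ` A)" using A(2) d by (simp add: bipart_def)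
    moreover have "\<sigma> ` A \<subseteq> ?L" using A(1) img by blast
    ultimately show ?thesis unfolding nontrivial_split_def using A c1 c2 d by metis
  qed
  have cp: "compatible_splits (image (image \<sigma>) S1) (image (image \<sigma>) S2)" if "S1 \<in> T" "S2 \<in> T" for S1 S2
  proof -
    have "compatible_splits S1 S2" using bt that unfolding binary_tree_def by blast
    then obtain A B where "A \<in> S1" "B \<in> S2" "A \<inter> B = {}"
      unfolding compatible_splits_def by blast
    then have h1: "\<sigma> ` A \<in> image (image \<sigma>) S1" and h2: "\<sigma> ` B \<in> image (image \<sigma>) S2"
      and h3: "\<sigma> ` A \<inter> \<sigma> ` B = {}"
      using image_Int[OF inj, of A B] by auto
    have "\<exists>B'\<in>image (image \<sigma>) S2. \<sigma> ` A \<inter> B' = {}" by (rule bexI[where P="\<lambda>B'. \<sigma> ` A \<inter> B' = {}", OF h3 h2])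
    then show ?thesis unfolding compatible_splits_def by (rule bexI[where P="\<lambda>A'. \<exists>B'\<in>image (image \<sigma>) S2. A' \<inter> B' = {}", OF _ h1])
  qed
  have "card (relabel \<sigma> T) = card T"
    using relabel_inj[OF inj] unfolding relabel_eq_img
    by (metis card_image inj_img inj_on_subset subset_UNIV inj)
  then show ?thesis using bt ns cp unfolding binary_tree_def relabel_eq_img by auto
qed

lemma restr_relabel:
  assumes inj: "inj \<sigma>"
  shows "restrict_tree (relabel \<sigma> T) (\<sigma> ` Q) = relabel \<sigma> (restrict_tree T Q)"
proof (rule set_eqI, rule iffI)
  have injf: "inj (image \<sigma>)" using inj_img[OF inj] .
  have cimg: "card (\<sigma> ` X) = card X" for X using card_image inj by (metis inj_on_subset subset_UNIV)
  fix x assume "x \<in> restrict_tree (relabel \<sigma> T) (\<sigma> ` Q)"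
  then obtain A' B' where AB: "x = {A' \<inter> \<sigma> ` Q, B' \<inter> \<sigma> ` Q}" "{A', B'} \<in> relabel \<sigma> T"
    "2 \<le> card (A' \<inter> \<sigma> ` Q)" "2 \<le> card (B' \<inter> \<sigma> ` Q)"
    unfolding restrict_tree_def by blast
  from AB(2) obtain S where S: "S \<in> T" "{A', B'} = image (image \<sigma>) S" unfolding relabel_eq_img by blast
  obtain A where A: "A \<in> S" "A' = \<sigma> ` A" using S(2) by (metis image_iff insertI1)
  obtain B where B: "B \<in> S" "B' = \<sigma> ` B" using S(2) by (metis image_iff insertI1 insert_commute)
  have "S = {A, B}"
  proof
    show "S \<subseteq> {A, B}"
    proof
      fix C assume "C \<in> S"
      then have "image \<sigma> C \<in> image (image \<sigma>) S" by (rule imageI)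
      then have "\<sigma> ` C \<in> {\<sigma> ` A, \<sigma> ` B}" using S(2) A(2) B(2) by simp
      then show "C \<in> {A, B}" using injf by (auto dest: injD)
    qed
    show "{A, B} \<subseteq> S" using A B by blast
  qed
  then have m: "{A, B} \<in> T" using S by simp
  have i1: "A' \<inter> \<sigma> ` Q = \<sigma> ` (A \<inter> Q)" "B' \<inter> \<sigma> ` Q = \<sigma> ` (B \<inter> Q)"
    using A B image_Int[OF inj] by auto
  have "{A \<inter> Q, B \<inter> Q} \<in> restrict_tree T Q"
    unfolding restrict_tree_def using m AB(3,4) i1 cimg by auto
  moreover have "x = image (image \<sigma>) {A \<inter> Q, B \<inter> Q}" using AB(1) i1 by simp
  ultimately show "x \<in> relabel \<sigma> (restrict_tree T Q)" unfolding relabel_eq_img by blast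
next
  have cimg: "card (\<sigma> ` X) = card X" for X using card_image inj by (metis inj_on_subset subset_UNIV)
  fix x assume "x \<in> relabel \<sigma> (restrict_tree T Q)"
  then obtain A B where AB: "x = image (image \<sigma>) {A \<inter> Q, B \<inter> Q}" "{A, B} \<in> T"
    "2 \<le> card (A \<inter> Q)" "2 \<le> card (B \<inter> Q)"
    unfolding relabel_eq_img restrict_tree_def by blast
  have i1: "\<sigma> ` A \<inter> \<sigma> ` Q = \<sigma> ` (A \<inter> Q)" "\<sigma> ` B \<inter> \<sigma> ` Q = \<sigma> ` (B \<inter> Q)"
    using image_Int[OF inj] by auto
  have "{\<sigma> ` A, \<sigma> ` B} \<in> relabel \<sigma> T"
    using imageI[OF AB(2), of "image (image \<sigma>)"] unfolding relabel_eq_img by simp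
  moreover have "x = {\<sigma> ` A \<inter> \<sigma> ` Q, \<sigma> ` B \<inter> \<sigma> ` Q}" using AB(1) i1 by simp
  ultimately have "x = {\<sigma> ` A \<inter> \<sigma> ` Q, \<sigma> ` B \<inter> \<sigma> ` Q} \<and> {\<sigma> ` A, \<sigma> ` B} \<in> relabel \<sigma> T
     \<and> 2 \<le> card (\<sigma> ` A \<inter> \<sigma> ` Q) \<and> 2 \<le> card (\<sigma> ` B \<inter> \<sigma> ` Q)"
    using AB(3,4) i1 cimg by simp
  then show "x \<in> restrict_tree (relabel \<sigma> T) (\<sigma> ` Q)"
    unfolding restrict_tree_def by blast
qed

lemma pq_relabel:
  assumes p: "\<sigma> permutes {1..n}" and pq: "pq n T1 T2 T3 T4"
  shows "pq n (relabel \<sigma> T1) (relabel \<sigma> T2) (relabel \<sigma> T3) (relabel \<sigma> T4)"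
  unfolding pq_def
proof (intro allI impI)
  fix Q' assume Q': "Q' \<subseteq> {1..n} \<and> card Q' = 4"
  have inj: "inj \<sigma>" using permutes_inj[OF p] .
  define Q where "Q = inv \<sigma> ` Q'"
  have sQ: "\<sigma> ` Q = Q'" unfolding Q_def image_image using permutes_inverses(1)[OF p] by simp
  have pinv: "inv \<sigma> permutes {1..n}" using permutes_inv[OF p] .
  have "Q \<subseteq> {1..n}" unfolding Q_def using Q' permutes_image[OF pinv] by blast
  moreover have "card Q = 4" unfolding Q_def using Q' card_image permutes_inj[OF pinv]
    by (metis inj_on_subset subset_UNIV)
  ultimately have e: "{#restrict_tree T1 Q, restrict_tree T2 Q#} = {#restrict_tree T3 Q, restrict_tree T4 Q#}"
    using pq unfolding pq_def by blast
  show "{#restrict_tree (relabel \<sigma> T1) Q', restrict_tree (relabel \<sigma> T2) Q'#} =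
        {#restrict_tree (relabel \<sigma> T3) Q', restrict_tree (relabel \<sigma> T4) Q'#}"
    unfolding sQ[symmetric] restr_relabel[OF inj]
    using arg_cong[OF e, of "image_mset (relabel \<sigma>)"] by simp
qed

lemma tp_permutes: "okperm n trs \<Longrightarrow> tp trs permutes {1..n}"
proof (induction trs)
  case Nil
  have "tp [] = id" by (simp add: tp_def)
  then show ?case using permutes_id by metis
next
  case (Cons ab trs)
  have "tp (ab # trs) = transpose (fst ab) (snd ab) \<circ> tp trs" by (simp add: tp_def)
  moreover have "tp trs permutes {1..n}" using Cons by (simp add: okperm_def)
  moreover have "transpose (fst ab) (snd ab) permutes {1..n}"
    using Cons.prems by (intro permutes_swap_id) (auto simp: okperm_def)
  ultimately show ?case by (metis permutes_compose)
qed

lemma toS_cp: "toS (cp p) = toS p"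
  by (auto simp: cp_def toS_def)

lemma seteq_half: "list_all (\<lambda>p. list_ex (\<lambda>q. cp p = cp q) y) x \<Longrightarrow> toS ` set x \<subseteq> toS ` set y"
proof
  fix S assume h: "list_all (\<lambda>p. list_ex (\<lambda>q. cp p = cp q) y) x" and S: "S \<in> toS ` set x"
  then obtain p where p: "p \<in> set x" "S = toS p" by blast
  then obtain q where q: "q \<in> set y" "cp p = cp q" using h unfolding list_all_iff list_ex_iff by blast
  have "S = toS q" using p(2) q(2) toS_cp by metis
  then show "S \<in> toS ` set y" using q(1) by blast
qed

lemma seteq_half2: "list_all (\<lambda>q. list_ex (\<lambda>p. cp p = cp q) x) y \<Longrightarrow> toS ` set y \<subseteq> toS ` set x"
proof
  fix S assume h: "list_all (\<lambda>q. list_ex (\<lambda>p. cp p = cp q) x) y" and S: "S \<in> toS ` set y"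
  then obtain q where q: "q \<in> set y" "S = toS q" by blast
  then obtain p where p: "p \<in> set x" "cp p = cp q" using h unfolding list_all_iff list_ex_iff by blast
  have "S = toS p" using p(2) q(2) toS_cp by metis
  then show "S \<in> toS ` set x" using p(1) by blast
qed

lemma seteq_toT: "seteq x y \<Longrightarrow> toT x = toT y"
  unfolding seteq_def toT_def using seteq_half seteq_half2 by blast

fun chkd :: "(nat \<Rightarrow> nat list) \<Rightarrow> (nat \<times> nat \<times> nat) list \<Rightarrow> nat \<Rightarrow> nat \<Rightarrow> nat \<Rightarrow> nat \<Rightarrow> bool" where
  "chkd f B r b c 0 = True"
| "chkd f B r b c (Suc d) = (if mc (f r) (f b) (f c) (f d) then
     (if (r = c \<and> b = d) \<or> (r = d \<and> b = c) \<or> (b, c, d) \<in> set B then chkd f B r b c d else False)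
     else chkd f B r b c d)"

fun chkc :: "(nat \<Rightarrow> nat list) \<Rightarrow> (nat \<times> nat \<times> nat) list \<Rightarrow> nat \<Rightarrow> nat \<Rightarrow> nat \<Rightarrow> nat \<Rightarrow> bool" where
  "chkc f B N r b 0 = True"
| "chkc f B N r b (Suc c) = (if sub (f r) (f b) (f c) then
     (if chkd f B r b c N then chkc f B N r b c else False) else chkc f B N r b c)"

lemma chkd_num: "chkd f B r b c (numeral k) = (if mc (f r) (f b) (f c) (f (pred_numeral k)) then
     (if (r = c \<and> b = pred_numeral k) \<or> (r = pred_numeral k \<and> b = c) \<or> (b, c, pred_numeral k) \<in> set B
      then chkd f B r b c (pred_numeral k) else False)
     else chkd f B r b c (pred_numeral k))"
  by (rule chkd.simps(2)[of f B r b c "pred_numeral k", unfolded numeral_eq_Suc[symmetric]])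

lemma chkc_num: "chkc f B N r b (numeral k) = (if sub (f r) (f b) (f (pred_numeral k)) then
     (if chkd f B r b (pred_numeral k) N then chkc f B N r b (pred_numeral k) else False)
     else chkc f B N r b (pred_numeral k))"
  by (rule chkc.simps(2)[of f B N r b "pred_numeral k", unfolded numeral_eq_Suc[symmetric]])

lemma chkd_sound: "chkd f B r b c n \<Longrightarrow> d < n \<Longrightarrow> mc (f r) (f b) (f c) (f d) \<Longrightarrow>
   (r = c \<and> b = d) \<or> (r = d \<and> b = c) \<or> (b, c, d) \<in> set B"
  by (induction n) (auto simp: less_Suc_eq split: if_splits)

lemma chkc_sound: "chkc f B N r b n \<Longrightarrow> c < n \<Longrightarrow> d < N \<Longrightarrow> mc (f r) (f b) (f c) (f d) \<Longrightarrow>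
   (r = c \<and> b = d) \<or> (r = d \<and> b = c) \<or> (b, c, d) \<in> set B"
proof (induction n)
  case 0 then show ?case by simp
next
  case (Suc n)
  have s: "sub (f r) (f b) (f c)" using mc_sub Suc.prems(4) .
  show ?case
  proof (cases "c = n")
    case True
    then have "chkd f B r b c N" using Suc.prems(1) s by (auto split: if_splits)
    then show ?thesis using chkd_sound Suc.prems by blast
  next
    case False
    then have "chkc f B N r b n" "c < n" using Suc.prems(1,2) by (auto split: if_splits)
    then show ?thesis using Suc.IH Suc.prems(3,4) by blast
  qed
qed

definition EL1 :: "(nat list \<times> nat list) list" where "EL1 = [([1,2],[3,4,5,6]), ([1,2,3],[4,5,6]), ([1,2,3,4],[5,6])]"
definition EL2 :: "(nat list \<times> nat list) list" where "EL2 = [([1,3],[2,4,5,6]), ([1,2,3],[4,5,6]), ([1,2,3,5],[4,6])]"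
definition EL3 :: "(nat list \<times> nat list) list" where "EL3 = [([1,3],[2,4,5,6]), ([1,2,3],[4,5,6]), ([1,2,3,4],[5,6])]"
definition EL4 :: "(nat list \<times> nat list) list" where "EL4 = [([1,2],[3,4,5,6]), ([1,2,3],[4,5,6]), ([1,2,3,5],[4,6])]"

lemma d12: "{1..6::nat} - {1,2} = {3,4,5,6}" by auto
lemma d13: "{1..6::nat} - {1,3} = {2,4,5,6}" by auto
lemma d123: "{1..6::nat} - {1,2,3} = {4,5,6}" by auto
lemma d1234: "{1..6::nat} - {1,2,3,4} = {5,6}" by auto
lemma d1235: "{1..6::nat} - {1,2,3,5} = {4,6}" by auto

lemma E1_toT: "E1 = toT EL1" unfolding E1_def EL1_def toT_def toS_def bipart_def d12 d13 d123 d1234 d1235 by simp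
lemma E2_toT: "E2 = toT EL2" unfolding E2_def EL2_def toT_def toS_def bipart_def d12 d13 d123 d1234 d1235 by simp
lemma E3_toT: "E3 = toT EL3" unfolding E3_def EL3_def toT_def toS_def bipart_def d12 d13 d123 d1234 d1235 by simp
lemma E4_toT: "E4 = toT EL4" unfolding E4_def EL4_def toT_def toS_def bipart_def d12 d13 d123 d1234 d1235 by simp

definition m2 :: "_ \<Rightarrow> _ \<Rightarrow> _ \<Rightarrow> _ \<Rightarrow> bool" where
  "m2 x1 x2 y1 y2 = ((seteq x1 y1 \<and> seteq x2 y2) \<or> (seteq x1 y2 \<and> seteq x2 y1))"

lemma m2_toT: "m2 x1 x2 y1 y2 \<Longrightarrow> {toT x1, toT x2} = {toT y1, toT y2}"
proof -
  assume "m2 x1 x2 y1 y2"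
  then consider "seteq x1 y1" "seteq x2 y2" | "seteq x1 y2" "seteq x2 y1" unfolding m2_def by blast
  then show ?thesis
  proof cases
    case 1 then show ?thesis using seteq_toT by metis
  next
    case 2 then have "toT x1 = toT y2" "toT x2 = toT y1" using seteq_toT by metis+
    then show ?thesis by (simp add: insert_commute)
  qed
qed

definition m4 :: "_ \<Rightarrow> _ \<Rightarrow> _ \<Rightarrow> _ \<Rightarrow> bool" where
  "m4 x1 x2 x3 x4 = ((m2 x1 x2 EL1 EL2 \<and> m2 x3 x4 EL3 EL4) \<or> (m2 x1 x2 EL3 EL4 \<and> m2 x3 x4 EL1 EL2))"

lemma m4_toT: "m4 x1 x2 x3 x4 \<Longrightarrow> {{toT x1, toT x2}, {toT x3, toT x4}} = {{E1, E2}, {E3, E4}}"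
proof -
  assume "m4 x1 x2 x3 x4"
  then consider "m2 x1 x2 EL1 EL2" "m2 x3 x4 EL3 EL4" | "m2 x1 x2 EL3 EL4" "m2 x3 x4 EL1 EL2"
    unfolding m4_def by blast
  then show ?thesis
  proof cases
    case 1 then show ?thesis unfolding E1_toT E2_toT E3_toT E4_toT using m2_toT[OF 1(1)] m2_toT[OF 1(2)] by simp
  next
    case 2 then have "{toT x1, toT x2} = {E3, E4}" "{toT x3, toT x4} = {E1, E2}"
      unfolding E1_toT E2_toT E3_toT E4_toT using m2_toT[OF 2(1)] m2_toT[OF 2(2)] by simp_all
    then show ?thesis by (simp add: insert_commute)
  qed
qed


lemma U5: "U 5 = [1,2,3,4,5]" by (simp add: U_def upt_rec)
lemma SPL5: "SPL 5 = [([1,2,3],[4,5]), ([1,2,4],[3,5]), ([1,2,5],[3,4]), ([1,2],[3,4,5]), ([1,3,4],[2,5]), ([1,3,5],[2,4]), ([1,3],[2,4,5]), ([1,4,5],[2,3]), ([1,4],[2,3,5]), ([1,5],[2,3,4])]"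
  by (simp add: SPL_def U5 cmpl_def)
lemma QL5: "QL 5 = [[1,2,3,4], [1,2,3,5], [1,2,4,5], [1,3,4,5], [2,3,4,5]]"
  by (simp add: QL_def U5)
lemma TRL5: "TRL 5 = [[([1,2,3],[4,5]),([1,2],[3,4,5])], [([1,2,3],[4,5]),([1,3],[2,4,5])], [([1,2,3],[4,5]),([1,4,5],[2,3])], [([1,2,4],[3,5]),([1,2],[3,4,5])], [([1,2,4],[3,5]),([1,3,5],[2,4])], [([1,2,4],[3,5]),([1,4],[2,3,5])], [([1,2,5],[3,4]),([1,2],[3,4,5])], [([1,2,5],[3,4]),([1,3,4],[2,5])], [([1,2,5],[3,4]),([1,5],[2,3,4])], [([1,3,4],[2,5]),([1,3],[2,4,5])], [([1,3,4],[2,5]),([1,4],[2,3,5])], [([1,3,5],[2,4]),([1,3],[2,4,5])], [([1,3,5],[2,4]),([1,5],[2,3,4])], [([1,4,5],[2,3]),([1,4],[2,3,5])], [([1,4,5],[2,3]),([1,5],[2,3,4])]]"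
  unfolding TRL_def SPL5 by (simp add: lcompat_def numeral_2_eq_2)
definition Tr5 :: "nat \<Rightarrow> (nat list \<times> nat list) list" where
  "Tr5 i = (if i < 7 then (if i < 3 then (if i < 1 then [([1,2,3],[4,5]),([1,2],[3,4,5])] else (if i < 2 then [([1,2,3],[4,5]),([1,3],[2,4,5])] else [([1,2,3],[4,5]),([1,4,5],[2,3])])) else (if i < 5 then (if i < 4 then [([1,2,4],[3,5]),([1,2],[3,4,5])] else [([1,2,4],[3,5]),([1,3,5],[2,4])]) else (if i < 6 then [([1,2,4],[3,5]),([1,4],[2,3,5])] else [([1,2,5],[3,4]),([1,2],[3,4,5])]))) else (if i < 11 then (if i < 9 then (if i < 8 then [([1,2,5],[3,4]),([1,3,4],[2,5])] else [([1,2,5],[3,4]),([1,5],[2,3,4])]) else (if i < 10 then [([1,3,4],[2,5]),([1,3],[2,4,5])] else [([1,3,4],[2,5]),([1,4],[2,3,5])])) else (if i < 13 then (if i < 12 then [([1,3,5],[2,4]),([1,3],[2,4,5])] else [([1,3,5],[2,4]),([1,5],[2,3,4])]) else (if i < 14 then [([1,4,5],[2,3]),([1,4],[2,3,5])] else [([1,4,5],[2,3]),([1,5],[2,3,4])]))))"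

lemma Tr5_simps [simp]:
  "Tr5 0 = [([1,2,3],[4,5]),([1,2],[3,4,5])]"
  "Tr5 1 = [([1,2,3],[4,5]),([1,3],[2,4,5])]"
  "Tr5 2 = [([1,2,3],[4,5]),([1,4,5],[2,3])]"
  "Tr5 3 = [([1,2,4],[3,5]),([1,2],[3,4,5])]"
  "Tr5 4 = [([1,2,4],[3,5]),([1,3,5],[2,4])]"
  "Tr5 5 = [([1,2,4],[3,5]),([1,4],[2,3,5])]"
  "Tr5 6 = [([1,2,5],[3,4]),([1,2],[3,4,5])]"
  "Tr5 7 = [([1,2,5],[3,4]),([1,3,4],[2,5])]"
  "Tr5 8 = [([1,2,5],[3,4]),([1,5],[2,3,4])]"
  "Tr5 9 = [([1,3,4],[2,5]),([1,3],[2,4,5])]"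
  "Tr5 10 = [([1,3,4],[2,5]),([1,4],[2,3,5])]"
  "Tr5 11 = [([1,3,5],[2,4]),([1,3],[2,4,5])]"
  "Tr5 12 = [([1,3,5],[2,4]),([1,5],[2,3,4])]"
  "Tr5 13 = [([1,4,5],[2,3]),([1,4],[2,3,5])]"
  "Tr5 14 = [([1,4,5],[2,3]),([1,5],[2,3,4])]"
  "Tr5 (Suc 0) = [([1,2,3],[4,5]),([1,3],[2,4,5])]"
  by (simp_all add: Tr5_def)

definition VV5 :: "nat \<Rightarrow> nat list" where
  "VV5 i = (if i < 7 then (if i < 3 then (if i < 1 then [2,2,2,3,3] else (if i < 2 then [3,3,2,3,3] else [4,5,2,3,3])) else (if i < 5 then (if i < 4 then [2,2,2,4,4] else [3,2,5,4,4]) else (if i < 6 then [4,2,4,4,4] else [2,2,2,5,5]))) else (if i < 11 then (if i < 9 then (if i < 8 then [2,3,4,5,5] else [2,5,5,5,5]) else (if i < 10 then [3,3,4,3,5] else [4,3,4,4,5])) else (if i < 13 then (if i < 12 then [3,3,5,3,4] else [3,5,5,5,4]) else (if i < 14 then [4,5,4,4,3] else [4,5,5,5,3]))))"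

lemma VV5_simps [simp]:
  "VV5 0 = [2,2,2,3,3]"
  "VV5 1 = [3,3,2,3,3]"
  "VV5 2 = [4,5,2,3,3]"
  "VV5 3 = [2,2,2,4,4]"
  "VV5 4 = [3,2,5,4,4]"
  "VV5 5 = [4,2,4,4,4]"
  "VV5 6 = [2,2,2,5,5]"
  "VV5 7 = [2,3,4,5,5]"
  "VV5 8 = [2,5,5,5,5]"
  "VV5 9 = [3,3,4,3,5]"
  "VV5 10 = [4,3,4,4,5]"
  "VV5 11 = [3,3,5,3,4]"
  "VV5 12 = [3,5,5,5,4]"
  "VV5 13 = [4,5,4,4,3]"
  "VV5 14 = [4,5,5,5,3]"
  "VV5 (Suc 0) = [3,3,2,3,3]"
  by (simp_all add: VV5_def)

lemma Tr5_lt: "\<forall>i\<in>set [0,1,2,3,4,5,6,7,8,9,10,11,12,13,14]. i < (15::nat)" by simp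
lemma TRL5_Tr: "TRL 5 = map Tr5 [0,1,2,3,4,5,6,7,8,9,10,11,12,13,14]"
  unfolding TRL5 by simp
lemma vec5: "allb (\<lambda>i. vec 5 (Tr5 i) = VV5 i \<and> list_all (\<lambda>p. distinct (fst p) \<and> distinct (snd p)) (Tr5 i)) 15"
  by (simp add: allb_num vec_def QL5)
lemma chk5: "allb (\<lambda>a. allb (\<lambda>b. chkc VV5 [] 15 a b 15) 15) 15"
  by (simp add: allb_num chkc_num chkd_num)



lemma U6: "U 6 = [1,2,3,4,5,6]" by (simp add: U_def upt_rec)
lemma SPL6: "SPL 6 = [([1,2,3,4],[5,6]), ([1,2,3,5],[4,6]), ([1,2,3,6],[4,5]), ([1,2,3],[4,5,6]), ([1,2,4,5],[3,6]), ([1,2,4,6],[3,5]), ([1,2,4],[3,5,6]), ([1,2,5,6],[3,4]), ([1,2,5],[3,4,6]), ([1,2,6],[3,4,5]), ([1,2],[3,4,5,6]), ([1,3,4,5],[2,6]), ([1,3,4,6],[2,5]), ([1,3,4],[2,5,6]), ([1,3,5,6],[2,4]), ([1,3,5],[2,4,6]), ([1,3,6],[2,4,5]), ([1,3],[2,4,5,6]), ([1,4,5,6],[2,3]), ([1,4,5],[2,3,6]), ([1,4,6],[2,3,5]), ([1,4],[2,3,5,6]), ([1,5,6],[2,3,4]), ([1,5],[2,3,4,6]), ([1,6],[2,3,4,5])]"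
  by (simp add: SPL_def U6 cmpl_def)
lemma QL6: "QL 6 = [[1,2,3,4], [1,2,3,5], [1,2,3,6], [1,2,4,5], [1,2,4,6], [1,2,5,6], [1,3,4,5], [1,3,4,6], [1,3,5,6], [1,4,5,6], [2,3,4,5], [2,3,4,6], [2,3,5,6], [2,4,5,6], [3,4,5,6]]"
  by (simp add: QL_def U6)
lemma TRL6: "TRL 6 = [[([1,2,3,4],[5,6]),([1,2,3],[4,5,6]),([1,2],[3,4,5,6])], [([1,2,3,4],[5,6]),([1,2,3],[4,5,6]),([1,3],[2,4,5,6])], [([1,2,3,4],[5,6]),([1,2,3],[4,5,6]),([1,4,5,6],[2,3])], [([1,2,3,4],[5,6]),([1,2,4],[3,5,6]),([1,2],[3,4,5,6])], [([1,2,3,4],[5,6]),([1,2,4],[3,5,6]),([1,3,5,6],[2,4])], [([1,2,3,4],[5,6]),([1,2,4],[3,5,6]),([1,4],[2,3,5,6])], [([1,2,3,4],[5,6]),([1,2,5,6],[3,4]),([1,2],[3,4,5,6])], [([1,2,3,4],[5,6]),([1,2,5,6],[3,4]),([1,3,4],[2,5,6])], [([1,2,3,4],[5,6]),([1,2,5,6],[3,4]),([1,5,6],[2,3,4])], [([1,2,3,4],[5,6]),([1,3,4],[2,5,6]),([1,3],[2,4,5,6])], [([1,2,3,4],[5,6]),([1,3,4],[2,5,6]),([1,4],[2,3,5,6])], [([1,2,3,4],[5,6]),([1,3,5,6],[2,4]),([1,3],[2,4,5,6])], [([1,2,3,4],[5,6]),([1,3,5,6],[2,4]),([1,5,6],[2,3,4])],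 [([1,2,3,4],[5,6]),([1,4,5,6],[2,3]),([1,4],[2,3,5,6])], [([1,2,3,4],[5,6]),([1,4,5,6],[2,3]),([1,5,6],[2,3,4])], [([1,2,3,5],[4,6]),([1,2,3],[4,5,6]),([1,2],[3,4,5,6])], [([1,2,3,5],[4,6]),([1,2,3],[4,5,6]),([1,3],[2,4,5,6])], [([1,2,3,5],[4,6]),([1,2,3],[4,5,6]),([1,4,5,6],[2,3])], [([1,2,3,5],[4,6]),([1,2,4,6],[3,5]),([1,2],[3,4,5,6])], [([1,2,3,5],[4,6]),([1,2,4,6],[3,5]),([1,3,5],[2,4,6])], [([1,2,3,5],[4,6]),([1,2,4,6],[3,5]),([1,4,6],[2,3,5])], [([1,2,3,5],[4,6]),([1,2,5],[3,4,6]),([1,2],[3,4,5,6])], [([1,2,3,5],[4,6]),([1,2,5],[3,4,6]),([1,3,4,6],[2,5])], [([1,2,3,5],[4,6]),([1,2,5],[3,4,6]),([1,5],[2,3,4,6])], [([1,2,3,5],[4,6]),([1,3,4,6],[2,5]),([1,3],[2,4,5,6])], [([1,2,3,5],[4,6]),([1,3,4,6],[2,5]),([1,4,6],[2,3,5])], [([1,2,3,5],[4,6]),([1,3,5],[2,4,6]),([1,3],[2,4,5,6])], [([1,2,3,5],[4,6]),([1,3,5],[2,4,6]),([1,5],[2,3,4,6])], [([1,2,3,5],[4,6]),([1,4,5,6],[2,3]),([1,4,6],[2,3,5])], [([1,2,3,5],[4,6]),([1,4,5,6],[2,3]),([1,5],[2,3,4,6])], [([1,2,3,6],[4,5]),([1,2,3],[4,5,6]),([1,2],[3,4,5,6])],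 [([1,2,3,6],[4,5]),([1,2,3],[4,5,6]),([1,3],[2,4,5,6])], [([1,2,3,6],[4,5]),([1,2,3],[4,5,6]),([1,4,5,6],[2,3])], [([1,2,3,6],[4,5]),([1,2,4,5],[3,6]),([1,2],[3,4,5,6])], [([1,2,3,6],[4,5]),([1,2,4,5],[3,6]),([1,3,6],[2,4,5])], [([1,2,3,6],[4,5]),([1,2,4,5],[3,6]),([1,4,5],[2,3,6])], [([1,2,3,6],[4,5]),([1,2,6],[3,4,5]),([1,2],[3,4,5,6])], [([1,2,3,6],[4,5]),([1,2,6],[3,4,5]),([1,3,4,5],[2,6])], [([1,2,3,6],[4,5]),([1,2,6],[3,4,5]),([1,6],[2,3,4,5])], [([1,2,3,6],[4,5]),([1,3,4,5],[2,6]),([1,3],[2,4,5,6])], [([1,2,3,6],[4,5]),([1,3,4,5],[2,6]),([1,4,5],[2,3,6])], [([1,2,3,6],[4,5]),([1,3,6],[2,4,5]),([1,3],[2,4,5,6])], [([1,2,3,6],[4,5]),([1,3,6],[2,4,5]),([1,6],[2,3,4,5])], [([1,2,3,6],[4,5]),([1,4,5,6],[2,3]),([1,4,5],[2,3,6])], [([1,2,3,6],[4,5]),([1,4,5,6],[2,3]),([1,6],[2,3,4,5])], [([1,2,4,5],[3,6]),([1,2,4],[3,5,6]),([1,2],[3,4,5,6])], [([1,2,4,5],[3,6]),([1,2,4],[3,5,6]),([1,3,5,6],[2,4])], [([1,2,4,5],[3,6]),([1,2,4],[3,5,6]),([1,4],[2,3,5,6])], [([1,2,4,5],[3,6]),([1,2,5],[3,4,6]),([1,2],[3,4,5,6])],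 [([1,2,4,5],[3,6]),([1,2,5],[3,4,6]),([1,3,4,6],[2,5])], [([1,2,4,5],[3,6]),([1,2,5],[3,4,6]),([1,5],[2,3,4,6])], [([1,2,4,5],[3,6]),([1,3,4,6],[2,5]),([1,3,6],[2,4,5])], [([1,2,4,5],[3,6]),([1,3,4,6],[2,5]),([1,4],[2,3,5,6])], [([1,2,4,5],[3,6]),([1,3,5,6],[2,4]),([1,3,6],[2,4,5])], [([1,2,4,5],[3,6]),([1,3,5,6],[2,4]),([1,5],[2,3,4,6])], [([1,2,4,5],[3,6]),([1,4,5],[2,3,6]),([1,4],[2,3,5,6])], [([1,2,4,5],[3,6]),([1,4,5],[2,3,6]),([1,5],[2,3,4,6])], [([1,2,4,6],[3,5]),([1,2,4],[3,5,6]),([1,2],[3,4,5,6])], [([1,2,4,6],[3,5]),([1,2,4],[3,5,6]),([1,3,5,6],[2,4])], [([1,2,4,6],[3,5]),([1,2,4],[3,5,6]),([1,4],[2,3,5,6])], [([1,2,4,6],[3,5]),([1,2,6],[3,4,5]),([1,2],[3,4,5,6])], [([1,2,4,6],[3,5]),([1,2,6],[3,4,5]),([1,3,4,5],[2,6])], [([1,2,4,6],[3,5]),([1,2,6],[3,4,5]),([1,6],[2,3,4,5])], [([1,2,4,6],[3,5]),([1,3,4,5],[2,6]),([1,3,5],[2,4,6])], [([1,2,4,6],[3,5]),([1,3,4,5],[2,6]),([1,4],[2,3,5,6])], [([1,2,4,6],[3,5]),([1,3,5,6],[2,4]),([1,3,5],[2,4,6])], [([1,2,4,6],[3,5]),([1,3,5,6],[2,4]),([1,6],[2,3,4,5])],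 [([1,2,4,6],[3,5]),([1,4,6],[2,3,5]),([1,4],[2,3,5,6])], [([1,2,4,6],[3,5]),([1,4,6],[2,3,5]),([1,6],[2,3,4,5])], [([1,2,5,6],[3,4]),([1,2,5],[3,4,6]),([1,2],[3,4,5,6])], [([1,2,5,6],[3,4]),([1,2,5],[3,4,6]),([1,3,4,6],[2,5])], [([1,2,5,6],[3,4]),([1,2,5],[3,4,6]),([1,5],[2,3,4,6])], [([1,2,5,6],[3,4]),([1,2,6],[3,4,5]),([1,2],[3,4,5,6])], [([1,2,5,6],[3,4]),([1,2,6],[3,4,5]),([1,3,4,5],[2,6])], [([1,2,5,6],[3,4]),([1,2,6],[3,4,5]),([1,6],[2,3,4,5])], [([1,2,5,6],[3,4]),([1,3,4,5],[2,6]),([1,3,4],[2,5,6])], [([1,2,5,6],[3,4]),([1,3,4,5],[2,6]),([1,5],[2,3,4,6])], [([1,2,5,6],[3,4]),([1,3,4,6],[2,5]),([1,3,4],[2,5,6])], [([1,2,5,6],[3,4]),([1,3,4,6],[2,5]),([1,6],[2,3,4,5])], [([1,2,5,6],[3,4]),([1,5,6],[2,3,4]),([1,5],[2,3,4,6])], [([1,2,5,6],[3,4]),([1,5,6],[2,3,4]),([1,6],[2,3,4,5])], [([1,3,4,5],[2,6]),([1,3,4],[2,5,6]),([1,3],[2,4,5,6])], [([1,3,4,5],[2,6]),([1,3,4],[2,5,6]),([1,4],[2,3,5,6])], [([1,3,4,5],[2,6]),([1,3,5],[2,4,6]),([1,3],[2,4,5,6])], [([1,3,4,5],[2,6]),([1,3,5],[2,4,6]),([1,5],[2,3,4,6])],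 [([1,3,4,5],[2,6]),([1,4,5],[2,3,6]),([1,4],[2,3,5,6])], [([1,3,4,5],[2,6]),([1,4,5],[2,3,6]),([1,5],[2,3,4,6])], [([1,3,4,6],[2,5]),([1,3,4],[2,5,6]),([1,3],[2,4,5,6])], [([1,3,4,6],[2,5]),([1,3,4],[2,5,6]),([1,4],[2,3,5,6])], [([1,3,4,6],[2,5]),([1,3,6],[2,4,5]),([1,3],[2,4,5,6])], [([1,3,4,6],[2,5]),([1,3,6],[2,4,5]),([1,6],[2,3,4,5])], [([1,3,4,6],[2,5]),([1,4,6],[2,3,5]),([1,4],[2,3,5,6])], [([1,3,4,6],[2,5]),([1,4,6],[2,3,5]),([1,6],[2,3,4,5])], [([1,3,5,6],[2,4]),([1,3,5],[2,4,6]),([1,3],[2,4,5,6])], [([1,3,5,6],[2,4]),([1,3,5],[2,4,6]),([1,5],[2,3,4,6])], [([1,3,5,6],[2,4]),([1,3,6],[2,4,5]),([1,3],[2,4,5,6])], [([1,3,5,6],[2,4]),([1,3,6],[2,4,5]),([1,6],[2,3,4,5])], [([1,3,5,6],[2,4]),([1,5,6],[2,3,4]),([1,5],[2,3,4,6])], [([1,3,5,6],[2,4]),([1,5,6],[2,3,4]),([1,6],[2,3,4,5])], [([1,4,5,6],[2,3]),([1,4,5],[2,3,6]),([1,4],[2,3,5,6])], [([1,4,5,6],[2,3]),([1,4,5],[2,3,6]),([1,5],[2,3,4,6])], [([1,4,5,6],[2,3]),([1,4,6],[2,3,5]),([1,4],[2,3,5,6])], [([1,4,5,6],[2,3]),([1,4,6],[2,3,5]),([1,6],[2,3,4,5])],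 [([1,4,5,6],[2,3]),([1,5,6],[2,3,4]),([1,5],[2,3,4,6])], [([1,4,5,6],[2,3]),([1,5,6],[2,3,4]),([1,6],[2,3,4,5])]]"
  unfolding TRL_def SPL6 by (simp add: lcompat_def numeral_3_eq_3)
definition Tr :: "nat \<Rightarrow> (nat list \<times> nat list) list" where
  "Tr i = (if i < 52 then (if i < 26 then (if i < 13 then (if i < 6 then (if i < 3 then (if i < 1 then [([1,2,3,4],[5,6]),([1,2,3],[4,5,6]),([1,2],[3,4,5,6])] else (if i < 2 then [([1,2,3,4],[5,6]),([1,2,3],[4,5,6]),([1,3],[2,4,5,6])] else [([1,2,3,4],[5,6]),([1,2,3],[4,5,6]),([1,4,5,6],[2,3])])) else (if i < 4 then [([1,2,3,4],[5,6]),([1,2,4],[3,5,6]),([1,2],[3,4,5,6])] else (if i < 5 then [([1,2,3,4],[5,6]),([1,2,4],[3,5,6]),([1,3,5,6],[2,4])] else [([1,2,3,4],[5,6]),([1,2,4],[3,5,6]),([1,4],[2,3,5,6])]))) else (if i < 9 then (if i < 7 then [([1,2,3,4],[5,6]),([1,2,5,6],[3,4]),([1,2],[3,4,5,6])] else (if i < 8 then [([1,2,3,4],[5,6]),([1,2,5,6],[3,4]),([1,3,4],[2,5,6])] else [([1,2,3,4],[5,6]),([1,2,5,6],[3,4]),([1,5,6],[2,3,4])])) else (if i < 11 then (if i < 10 then [([1,2,3,4],[5,6]),([1,3,4],[2,5,6]),([1,3],[2,4,5,6])] else [([1,2,3,4],[5,6]),([1,3,4],[2,5,6]),([1,4],[2,3,5,6])])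 else (if i < 12 then [([1,2,3,4],[5,6]),([1,3,5,6],[2,4]),([1,3],[2,4,5,6])] else [([1,2,3,4],[5,6]),([1,3,5,6],[2,4]),([1,5,6],[2,3,4])])))) else (if i < 19 then (if i < 16 then (if i < 14 then [([1,2,3,4],[5,6]),([1,4,5,6],[2,3]),([1,4],[2,3,5,6])] else (if i < 15 then [([1,2,3,4],[5,6]),([1,4,5,6],[2,3]),([1,5,6],[2,3,4])] else [([1,2,3,5],[4,6]),([1,2,3],[4,5,6]),([1,2],[3,4,5,6])])) else (if i < 17 then [([1,2,3,5],[4,6]),([1,2,3],[4,5,6]),([1,3],[2,4,5,6])] else (if i < 18 then [([1,2,3,5],[4,6]),([1,2,3],[4,5,6]),([1,4,5,6],[2,3])] else [([1,2,3,5],[4,6]),([1,2,4,6],[3,5]),([1,2],[3,4,5,6])]))) else (if i < 22 then (if i < 20 then [([1,2,3,5],[4,6]),([1,2,4,6],[3,5]),([1,3,5],[2,4,6])] else (if i < 21 then [([1,2,3,5],[4,6]),([1,2,4,6],[3,5]),([1,4,6],[2,3,5])] else [([1,2,3,5],[4,6]),([1,2,5],[3,4,6]),([1,2],[3,4,5,6])])) else (if i < 24 then (if i < 23 then [([1,2,3,5],[4,6]),([1,2,5],[3,4,6]),([1,3,4,6],[2,5])] else [([1,2,3,5],[4,6]),([1,2,5],[3,4,6]),([1,5],[2,3,4,6])]) else (if i < 25 then [([1,2,3,5],[4,6]),([1,3,4,6],[2,5]),([1,3],[2,4,5,6])] else [([1,2,3,5],[4,6]),([1,3,4,6],[2,5]),([1,4,6],[2,3,5])])))))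 else (if i < 39 then (if i < 32 then (if i < 29 then (if i < 27 then [([1,2,3,5],[4,6]),([1,3,5],[2,4,6]),([1,3],[2,4,5,6])] else (if i < 28 then [([1,2,3,5],[4,6]),([1,3,5],[2,4,6]),([1,5],[2,3,4,6])] else [([1,2,3,5],[4,6]),([1,4,5,6],[2,3]),([1,4,6],[2,3,5])])) else (if i < 30 then [([1,2,3,5],[4,6]),([1,4,5,6],[2,3]),([1,5],[2,3,4,6])] else (if i < 31 then [([1,2,3,6],[4,5]),([1,2,3],[4,5,6]),([1,2],[3,4,5,6])] else [([1,2,3,6],[4,5]),([1,2,3],[4,5,6]),([1,3],[2,4,5,6])]))) else (if i < 35 then (if i < 33 then [([1,2,3,6],[4,5]),([1,2,3],[4,5,6]),([1,4,5,6],[2,3])] else (if i < 34 then [([1,2,3,6],[4,5]),([1,2,4,5],[3,6]),([1,2],[3,4,5,6])] else [([1,2,3,6],[4,5]),([1,2,4,5],[3,6]),([1,3,6],[2,4,5])])) else (if i < 37 then (if i < 36 then [([1,2,3,6],[4,5]),([1,2,4,5],[3,6]),([1,4,5],[2,3,6])] else [([1,2,3,6],[4,5]),([1,2,6],[3,4,5]),([1,2],[3,4,5,6])]) else (if i < 38 then [([1,2,3,6],[4,5]),([1,2,6],[3,4,5]),([1,3,4,5],[2,6])] else [([1,2,3,6],[4,5]),([1,2,6],[3,4,5]),([1,6],[2,3,4,5])])))) else (if i < 45 then (if i < 42 then (if i < 40 then [([1,2,3,6],[4,5]),([1,3,4,5],[2,6]),([1,3],[2,4,5,6])] else (if i < 41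 then [([1,2,3,6],[4,5]),([1,3,4,5],[2,6]),([1,4,5],[2,3,6])] else [([1,2,3,6],[4,5]),([1,3,6],[2,4,5]),([1,3],[2,4,5,6])])) else (if i < 43 then [([1,2,3,6],[4,5]),([1,3,6],[2,4,5]),([1,6],[2,3,4,5])] else (if i < 44 then [([1,2,3,6],[4,5]),([1,4,5,6],[2,3]),([1,4,5],[2,3,6])] else [([1,2,3,6],[4,5]),([1,4,5,6],[2,3]),([1,6],[2,3,4,5])]))) else (if i < 48 then (if i < 46 then [([1,2,4,5],[3,6]),([1,2,4],[3,5,6]),([1,2],[3,4,5,6])] else (if i < 47 then [([1,2,4,5],[3,6]),([1,2,4],[3,5,6]),([1,3,5,6],[2,4])] else [([1,2,4,5],[3,6]),([1,2,4],[3,5,6]),([1,4],[2,3,5,6])])) else (if i < 50 then (if i < 49 then [([1,2,4,5],[3,6]),([1,2,5],[3,4,6]),([1,2],[3,4,5,6])] else [([1,2,4,5],[3,6]),([1,2,5],[3,4,6]),([1,3,4,6],[2,5])]) else (if i < 51 then [([1,2,4,5],[3,6]),([1,2,5],[3,4,6]),([1,5],[2,3,4,6])] else [([1,2,4,5],[3,6]),([1,3,4,6],[2,5]),([1,3,6],[2,4,5])])))))) else (if i < 78 then (if i < 65 then (if i < 58 then (if i < 55 then (if i < 53 then [([1,2,4,5],[3,6]),([1,3,4,6],[2,5]),([1,4],[2,3,5,6])] else (if i < 54 then [([1,2,4,5],[3,6]),([1,3,5,6],[2,4]),([1,3,6],[2,4,5])] else [([1,2,4,5],[3,6]),([1,3,5,6],[2,4]),([1,5],[2,3,4,6])]))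 else (if i < 56 then [([1,2,4,5],[3,6]),([1,4,5],[2,3,6]),([1,4],[2,3,5,6])] else (if i < 57 then [([1,2,4,5],[3,6]),([1,4,5],[2,3,6]),([1,5],[2,3,4,6])] else [([1,2,4,6],[3,5]),([1,2,4],[3,5,6]),([1,2],[3,4,5,6])]))) else (if i < 61 then (if i < 59 then [([1,2,4,6],[3,5]),([1,2,4],[3,5,6]),([1,3,5,6],[2,4])] else (if i < 60 then [([1,2,4,6],[3,5]),([1,2,4],[3,5,6]),([1,4],[2,3,5,6])] else [([1,2,4,6],[3,5]),([1,2,6],[3,4,5]),([1,2],[3,4,5,6])])) else (if i < 63 then (if i < 62 then [([1,2,4,6],[3,5]),([1,2,6],[3,4,5]),([1,3,4,5],[2,6])] else [([1,2,4,6],[3,5]),([1,2,6],[3,4,5]),([1,6],[2,3,4,5])]) else (if i < 64 then [([1,2,4,6],[3,5]),([1,3,4,5],[2,6]),([1,3,5],[2,4,6])] else [([1,2,4,6],[3,5]),([1,3,4,5],[2,6]),([1,4],[2,3,5,6])])))) else (if i < 71 then (if i < 68 then (if i < 66 then [([1,2,4,6],[3,5]),([1,3,5,6],[2,4]),([1,3,5],[2,4,6])] else (if i < 67 then [([1,2,4,6],[3,5]),([1,3,5,6],[2,4]),([1,6],[2,3,4,5])] else [([1,2,4,6],[3,5]),([1,4,6],[2,3,5]),([1,4],[2,3,5,6])])) else (if i < 69 then [([1,2,4,6],[3,5]),([1,4,6],[2,3,5]),([1,6],[2,3,4,5])] else (if i < 70 then [([1,2,5,6],[3,4]),([1,2,5],[3,4,6]),([1,2],[3,4,5,6])]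 else [([1,2,5,6],[3,4]),([1,2,5],[3,4,6]),([1,3,4,6],[2,5])]))) else (if i < 74 then (if i < 72 then [([1,2,5,6],[3,4]),([1,2,5],[3,4,6]),([1,5],[2,3,4,6])] else (if i < 73 then [([1,2,5,6],[3,4]),([1,2,6],[3,4,5]),([1,2],[3,4,5,6])] else [([1,2,5,6],[3,4]),([1,2,6],[3,4,5]),([1,3,4,5],[2,6])])) else (if i < 76 then (if i < 75 then [([1,2,5,6],[3,4]),([1,2,6],[3,4,5]),([1,6],[2,3,4,5])] else [([1,2,5,6],[3,4]),([1,3,4,5],[2,6]),([1,3,4],[2,5,6])]) else (if i < 77 then [([1,2,5,6],[3,4]),([1,3,4,5],[2,6]),([1,5],[2,3,4,6])] else [([1,2,5,6],[3,4]),([1,3,4,6],[2,5]),([1,3,4],[2,5,6])]))))) else (if i < 91 then (if i < 84 then (if i < 81 then (if i < 79 then [([1,2,5,6],[3,4]),([1,3,4,6],[2,5]),([1,6],[2,3,4,5])] else (if i < 80 then [([1,2,5,6],[3,4]),([1,5,6],[2,3,4]),([1,5],[2,3,4,6])] else [([1,2,5,6],[3,4]),([1,5,6],[2,3,4]),([1,6],[2,3,4,5])])) else (if i < 82 then [([1,3,4,5],[2,6]),([1,3,4],[2,5,6]),([1,3],[2,4,5,6])] else (if i < 83 then [([1,3,4,5],[2,6]),([1,3,4],[2,5,6]),([1,4],[2,3,5,6])] else [([1,3,4,5],[2,6]),([1,3,5],[2,4,6]),([1,3],[2,4,5,6])]))) else (if i < 87 then (if i < 85 then [([1,3,4,5],[2,6]),([1,3,5],[2,4,6]),([1,5],[2,3,4,6])]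 else (if i < 86 then [([1,3,4,5],[2,6]),([1,4,5],[2,3,6]),([1,4],[2,3,5,6])] else [([1,3,4,5],[2,6]),([1,4,5],[2,3,6]),([1,5],[2,3,4,6])])) else (if i < 89 then (if i < 88 then [([1,3,4,6],[2,5]),([1,3,4],[2,5,6]),([1,3],[2,4,5,6])] else [([1,3,4,6],[2,5]),([1,3,4],[2,5,6]),([1,4],[2,3,5,6])]) else (if i < 90 then [([1,3,4,6],[2,5]),([1,3,6],[2,4,5]),([1,3],[2,4,5,6])] else [([1,3,4,6],[2,5]),([1,3,6],[2,4,5]),([1,6],[2,3,4,5])])))) else (if i < 98 then (if i < 94 then (if i < 92 then [([1,3,4,6],[2,5]),([1,4,6],[2,3,5]),([1,4],[2,3,5,6])] else (if i < 93 then [([1,3,4,6],[2,5]),([1,4,6],[2,3,5]),([1,6],[2,3,4,5])] else [([1,3,5,6],[2,4]),([1,3,5],[2,4,6]),([1,3],[2,4,5,6])])) else (if i < 96 then (if i < 95 then [([1,3,5,6],[2,4]),([1,3,5],[2,4,6]),([1,5],[2,3,4,6])] else [([1,3,5,6],[2,4]),([1,3,6],[2,4,5]),([1,3],[2,4,5,6])]) else (if i < 97 then [([1,3,5,6],[2,4]),([1,3,6],[2,4,5]),([1,6],[2,3,4,5])] else [([1,3,5,6],[2,4]),([1,5,6],[2,3,4]),([1,5],[2,3,4,6])]))) else (if i < 101 then (if i < 99 then [([1,3,5,6],[2,4]),([1,5,6],[2,3,4]),([1,6],[2,3,4,5])] else (if i < 100 then [([1,4,5,6],[2,3]),([1,4,5],[2,3,6]),([1,4],[2,3,5,6])]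 else [([1,4,5,6],[2,3]),([1,4,5],[2,3,6]),([1,5],[2,3,4,6])])) else (if i < 103 then (if i < 102 then [([1,4,5,6],[2,3]),([1,4,6],[2,3,5]),([1,4],[2,3,5,6])] else [([1,4,5,6],[2,3]),([1,4,6],[2,3,5]),([1,6],[2,3,4,5])]) else (if i < 104 then [([1,4,5,6],[2,3]),([1,5,6],[2,3,4]),([1,5],[2,3,4,6])] else [([1,4,5,6],[2,3]),([1,5,6],[2,3,4]),([1,6],[2,3,4,5])])))))))"

lemma Tr_simps [simp]:
  "Tr 0 = [([1,2,3,4],[5,6]),([1,2,3],[4,5,6]),([1,2],[3,4,5,6])]"
  "Tr 1 = [([1,2,3,4],[5,6]),([1,2,3],[4,5,6]),([1,3],[2,4,5,6])]"
  "Tr 2 = [([1,2,3,4],[5,6]),([1,2,3],[4,5,6]),([1,4,5,6],[2,3])]"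
  "Tr 3 = [([1,2,3,4],[5,6]),([1,2,4],[3,5,6]),([1,2],[3,4,5,6])]"
  "Tr 4 = [([1,2,3,4],[5,6]),([1,2,4],[3,5,6]),([1,3,5,6],[2,4])]"
  "Tr 5 = [([1,2,3,4],[5,6]),([1,2,4],[3,5,6]),([1,4],[2,3,5,6])]"
  "Tr 6 = [([1,2,3,4],[5,6]),([1,2,5,6],[3,4]),([1,2],[3,4,5,6])]"
  "Tr 7 = [([1,2,3,4],[5,6]),([1,2,5,6],[3,4]),([1,3,4],[2,5,6])]"
  "Tr 8 = [([1,2,3,4],[5,6]),([1,2,5,6],[3,4]),([1,5,6],[2,3,4])]"
  "Tr 9 = [([1,2,3,4],[5,6]),([1,3,4],[2,5,6]),([1,3],[2,4,5,6])]"
  "Tr 10 = [([1,2,3,4],[5,6]),([1,3,4],[2,5,6]),([1,4],[2,3,5,6])]"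
  "Tr 11 = [([1,2,3,4],[5,6]),([1,3,5,6],[2,4]),([1,3],[2,4,5,6])]"
  "Tr 12 = [([1,2,3,4],[5,6]),([1,3,5,6],[2,4]),([1,5,6],[2,3,4])]"
  "Tr 13 = [([1,2,3,4],[5,6]),([1,4,5,6],[2,3]),([1,4],[2,3,5,6])]"
  "Tr 14 = [([1,2,3,4],[5,6]),([1,4,5,6],[2,3]),([1,5,6],[2,3,4])]"
  "Tr 15 = [([1,2,3,5],[4,6]),([1,2,3],[4,5,6]),([1,2],[3,4,5,6])]"
  "Tr 16 = [([1,2,3,5],[4,6]),([1,2,3],[4,5,6]),([1,3],[2,4,5,6])]"
  "Tr 17 = [([1,2,3,5],[4,6]),([1,2,3],[4,5,6]),([1,4,5,6],[2,3])]"
  "Tr 18 = [([1,2,3,5],[4,6]),([1,2,4,6],[3,5]),([1,2],[3,4,5,6])]"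
  "Tr 19 = [([1,2,3,5],[4,6]),([1,2,4,6],[3,5]),([1,3,5],[2,4,6])]"
  "Tr 20 = [([1,2,3,5],[4,6]),([1,2,4,6],[3,5]),([1,4,6],[2,3,5])]"
  "Tr 21 = [([1,2,3,5],[4,6]),([1,2,5],[3,4,6]),([1,2],[3,4,5,6])]"
  "Tr 22 = [([1,2,3,5],[4,6]),([1,2,5],[3,4,6]),([1,3,4,6],[2,5])]"
  "Tr 23 = [([1,2,3,5],[4,6]),([1,2,5],[3,4,6]),([1,5],[2,3,4,6])]"
  "Tr 24 = [([1,2,3,5],[4,6]),([1,3,4,6],[2,5]),([1,3],[2,4,5,6])]"
  "Tr 25 = [([1,2,3,5],[4,6]),([1,3,4,6],[2,5]),([1,4,6],[2,3,5])]"
  "Tr 26 = [([1,2,3,5],[4,6]),([1,3,5],[2,4,6]),([1,3],[2,4,5,6])]"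
  "Tr 27 = [([1,2,3,5],[4,6]),([1,3,5],[2,4,6]),([1,5],[2,3,4,6])]"
  "Tr 28 = [([1,2,3,5],[4,6]),([1,4,5,6],[2,3]),([1,4,6],[2,3,5])]"
  "Tr 29 = [([1,2,3,5],[4,6]),([1,4,5,6],[2,3]),([1,5],[2,3,4,6])]"
  "Tr 30 = [([1,2,3,6],[4,5]),([1,2,3],[4,5,6]),([1,2],[3,4,5,6])]"
  "Tr 31 = [([1,2,3,6],[4,5]),([1,2,3],[4,5,6]),([1,3],[2,4,5,6])]"
  "Tr 32 = [([1,2,3,6],[4,5]),([1,2,3],[4,5,6]),([1,4,5,6],[2,3])]"
  "Tr 33 = [([1,2,3,6],[4,5]),([1,2,4,5],[3,6]),([1,2],[3,4,5,6])]"
  "Tr 34 = [([1,2,3,6],[4,5]),([1,2,4,5],[3,6]),([1,3,6],[2,4,5])]"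
  "Tr 35 = [([1,2,3,6],[4,5]),([1,2,4,5],[3,6]),([1,4,5],[2,3,6])]"
  "Tr 36 = [([1,2,3,6],[4,5]),([1,2,6],[3,4,5]),([1,2],[3,4,5,6])]"
  "Tr 37 = [([1,2,3,6],[4,5]),([1,2,6],[3,4,5]),([1,3,4,5],[2,6])]"
  "Tr 38 = [([1,2,3,6],[4,5]),([1,2,6],[3,4,5]),([1,6],[2,3,4,5])]"
  "Tr 39 = [([1,2,3,6],[4,5]),([1,3,4,5],[2,6]),([1,3],[2,4,5,6])]"
  "Tr 40 = [([1,2,3,6],[4,5]),([1,3,4,5],[2,6]),([1,4,5],[2,3,6])]"
  "Tr 41 = [([1,2,3,6],[4,5]),([1,3,6],[2,4,5]),([1,3],[2,4,5,6])]"
  "Tr 42 = [([1,2,3,6],[4,5]),([1,3,6],[2,4,5]),([1,6],[2,3,4,5])]"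
  "Tr 43 = [([1,2,3,6],[4,5]),([1,4,5,6],[2,3]),([1,4,5],[2,3,6])]"
  "Tr 44 = [([1,2,3,6],[4,5]),([1,4,5,6],[2,3]),([1,6],[2,3,4,5])]"
  "Tr 45 = [([1,2,4,5],[3,6]),([1,2,4],[3,5,6]),([1,2],[3,4,5,6])]"
  "Tr 46 = [([1,2,4,5],[3,6]),([1,2,4],[3,5,6]),([1,3,5,6],[2,4])]"
  "Tr 47 = [([1,2,4,5],[3,6]),([1,2,4],[3,5,6]),([1,4],[2,3,5,6])]"
  "Tr 48 = [([1,2,4,5],[3,6]),([1,2,5],[3,4,6]),([1,2],[3,4,5,6])]"
  "Tr 49 = [([1,2,4,5],[3,6]),([1,2,5],[3,4,6]),([1,3,4,6],[2,5])]"
  "Tr 50 = [([1,2,4,5],[3,6]),([1,2,5],[3,4,6]),([1,5],[2,3,4,6])]"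
  "Tr 51 = [([1,2,4,5],[3,6]),([1,3,4,6],[2,5]),([1,3,6],[2,4,5])]"
  "Tr 52 = [([1,2,4,5],[3,6]),([1,3,4,6],[2,5]),([1,4],[2,3,5,6])]"
  "Tr 53 = [([1,2,4,5],[3,6]),([1,3,5,6],[2,4]),([1,3,6],[2,4,5])]"
  "Tr 54 = [([1,2,4,5],[3,6]),([1,3,5,6],[2,4]),([1,5],[2,3,4,6])]"
  "Tr 55 = [([1,2,4,5],[3,6]),([1,4,5],[2,3,6]),([1,4],[2,3,5,6])]"
  "Tr 56 = [([1,2,4,5],[3,6]),([1,4,5],[2,3,6]),([1,5],[2,3,4,6])]"
  "Tr 57 = [([1,2,4,6],[3,5]),([1,2,4],[3,5,6]),([1,2],[3,4,5,6])]"
  "Tr 58 = [([1,2,4,6],[3,5]),([1,2,4],[3,5,6]),([1,3,5,6],[2,4])]"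
  "Tr 59 = [([1,2,4,6],[3,5]),([1,2,4],[3,5,6]),([1,4],[2,3,5,6])]"
  "Tr 60 = [([1,2,4,6],[3,5]),([1,2,6],[3,4,5]),([1,2],[3,4,5,6])]"
  "Tr 61 = [([1,2,4,6],[3,5]),([1,2,6],[3,4,5]),([1,3,4,5],[2,6])]"
  "Tr 62 = [([1,2,4,6],[3,5]),([1,2,6],[3,4,5]),([1,6],[2,3,4,5])]"
  "Tr 63 = [([1,2,4,6],[3,5]),([1,3,4,5],[2,6]),([1,3,5],[2,4,6])]"
  "Tr 64 = [([1,2,4,6],[3,5]),([1,3,4,5],[2,6]),([1,4],[2,3,5,6])]"
  "Tr 65 = [([1,2,4,6],[3,5]),([1,3,5,6],[2,4]),([1,3,5],[2,4,6])]"
  "Tr 66 = [([1,2,4,6],[3,5]),([1,3,5,6],[2,4]),([1,6],[2,3,4,5])]"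
  "Tr 67 = [([1,2,4,6],[3,5]),([1,4,6],[2,3,5]),([1,4],[2,3,5,6])]"
  "Tr 68 = [([1,2,4,6],[3,5]),([1,4,6],[2,3,5]),([1,6],[2,3,4,5])]"
  "Tr 69 = [([1,2,5,6],[3,4]),([1,2,5],[3,4,6]),([1,2],[3,4,5,6])]"
  "Tr 70 = [([1,2,5,6],[3,4]),([1,2,5],[3,4,6]),([1,3,4,6],[2,5])]"
  "Tr 71 = [([1,2,5,6],[3,4]),([1,2,5],[3,4,6]),([1,5],[2,3,4,6])]"
  "Tr 72 = [([1,2,5,6],[3,4]),([1,2,6],[3,4,5]),([1,2],[3,4,5,6])]"
  "Tr 73 = [([1,2,5,6],[3,4]),([1,2,6],[3,4,5]),([1,3,4,5],[2,6])]"
  "Tr 74 = [([1,2,5,6],[3,4]),([1,2,6],[3,4,5]),([1,6],[2,3,4,5])]"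
  "Tr 75 = [([1,2,5,6],[3,4]),([1,3,4,5],[2,6]),([1,3,4],[2,5,6])]"
  "Tr 76 = [([1,2,5,6],[3,4]),([1,3,4,5],[2,6]),([1,5],[2,3,4,6])]"
  "Tr 77 = [([1,2,5,6],[3,4]),([1,3,4,6],[2,5]),([1,3,4],[2,5,6])]"
  "Tr 78 = [([1,2,5,6],[3,4]),([1,3,4,6],[2,5]),([1,6],[2,3,4,5])]"
  "Tr 79 = [([1,2,5,6],[3,4]),([1,5,6],[2,3,4]),([1,5],[2,3,4,6])]"
  "Tr 80 = [([1,2,5,6],[3,4]),([1,5,6],[2,3,4]),([1,6],[2,3,4,5])]"
  "Tr 81 = [([1,3,4,5],[2,6]),([1,3,4],[2,5,6]),([1,3],[2,4,5,6])]"
  "Tr 82 = [([1,3,4,5],[2,6]),([1,3,4],[2,5,6]),([1,4],[2,3,5,6])]"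
  "Tr 83 = [([1,3,4,5],[2,6]),([1,3,5],[2,4,6]),([1,3],[2,4,5,6])]"
  "Tr 84 = [([1,3,4,5],[2,6]),([1,3,5],[2,4,6]),([1,5],[2,3,4,6])]"
  "Tr 85 = [([1,3,4,5],[2,6]),([1,4,5],[2,3,6]),([1,4],[2,3,5,6])]"
  "Tr 86 = [([1,3,4,5],[2,6]),([1,4,5],[2,3,6]),([1,5],[2,3,4,6])]"
  "Tr 87 = [([1,3,4,6],[2,5]),([1,3,4],[2,5,6]),([1,3],[2,4,5,6])]"
  "Tr 88 = [([1,3,4,6],[2,5]),([1,3,4],[2,5,6]),([1,4],[2,3,5,6])]"
  "Tr 89 = [([1,3,4,6],[2,5]),([1,3,6],[2,4,5]),([1,3],[2,4,5,6])]"
  "Tr 90 = [([1,3,4,6],[2,5]),([1,3,6],[2,4,5]),([1,6],[2,3,4,5])]"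
  "Tr 91 = [([1,3,4,6],[2,5]),([1,4,6],[2,3,5]),([1,4],[2,3,5,6])]"
  "Tr 92 = [([1,3,4,6],[2,5]),([1,4,6],[2,3,5]),([1,6],[2,3,4,5])]"
  "Tr 93 = [([1,3,5,6],[2,4]),([1,3,5],[2,4,6]),([1,3],[2,4,5,6])]"
  "Tr 94 = [([1,3,5,6],[2,4]),([1,3,5],[2,4,6]),([1,5],[2,3,4,6])]"
  "Tr 95 = [([1,3,5,6],[2,4]),([1,3,6],[2,4,5]),([1,3],[2,4,5,6])]"
  "Tr 96 = [([1,3,5,6],[2,4]),([1,3,6],[2,4,5]),([1,6],[2,3,4,5])]"
  "Tr 97 = [([1,3,5,6],[2,4]),([1,5,6],[2,3,4]),([1,5],[2,3,4,6])]"
  "Tr 98 = [([1,3,5,6],[2,4]),([1,5,6],[2,3,4]),([1,6],[2,3,4,5])]"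
  "Tr 99 = [([1,4,5,6],[2,3]),([1,4,5],[2,3,6]),([1,4],[2,3,5,6])]"
  "Tr 100 = [([1,4,5,6],[2,3]),([1,4,5],[2,3,6]),([1,5],[2,3,4,6])]"
  "Tr 101 = [([1,4,5,6],[2,3]),([1,4,6],[2,3,5]),([1,4],[2,3,5,6])]"
  "Tr 102 = [([1,4,5,6],[2,3]),([1,4,6],[2,3,5]),([1,6],[2,3,4,5])]"
  "Tr 103 = [([1,4,5,6],[2,3]),([1,5,6],[2,3,4]),([1,5],[2,3,4,6])]"
  "Tr 104 = [([1,4,5,6],[2,3]),([1,5,6],[2,3,4]),([1,6],[2,3,4,5])]"
  "Tr (Suc 0) = [([1,2,3,4],[5,6]),([1,2,3],[4,5,6]),([1,3],[2,4,5,6])]"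
  by (simp_all add: Tr_def)

definition VV :: "nat \<Rightarrow> nat list" where
  "VV i = (if i < 52 then (if i < 26 then (if i < 13 then (if i < 6 then (if i < 3 then (if i < 1 then [2,2,2,2,2,2,3,3,3,4,3,3,3,4,4] else (if i < 2 then [3,3,3,2,2,2,3,3,3,4,3,3,3,4,4] else [4,5,6,2,2,2,3,3,3,4,3,3,3,4,4])) else (if i < 4 then [2,2,2,2,2,2,4,4,3,4,4,4,3,4,4] else (if i < 5 then [3,2,2,5,6,2,4,4,3,4,4,4,3,4,4] else [4,2,2,4,4,2,4,4,3,4,4,4,3,4,4]))) else (if i < 9 then (if i < 7 then [2,2,2,2,2,2,5,6,3,4,5,6,3,4,4] else (if i < 8 then [2,3,3,4,4,2,5,6,3,4,5,6,3,4,4] else [2,5,6,5,6,2,5,6,3,4,5,6,3,4,4])) else (if i < 11 then (if i < 10 then [3,3,3,4,4,2,3,3,3,4,5,6,3,4,4] else [4,3,3,4,4,2,4,4,3,4,5,6,3,4,4]) else (if i < 12 then [3,3,3,5,6,2,3,3,3,4,4,4,3,4,4] else [3,5,6,5,6,2,5,6,3,4,4,4,3,4,4])))) else (if i < 19 then (if i < 16 then (if i < 14 then [4,5,6,4,4,2,4,4,3,4,3,3,3,4,4] else (if i < 15 then [4,5,6,5,6,2,5,6,3,4,3,3,3,4,4] else [2,2,2,2,2,2,3,3,3,5,3,3,3,5,5])) else (if i < 17 then [3,3,3,2,2,2,3,3,3,5,3,3,3,5,5] else (if i < 18 then [4,5,6,2,2,2,3,3,3,5,3,3,3,5,5] else [2,2,2,2,2,2,4,3,6,5,4,3,6,5,5])))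 else (if i < 22 then (if i < 20 then [3,2,3,5,2,5,4,3,6,5,4,3,6,5,5] else (if i < 21 then [4,2,6,4,2,6,4,3,6,5,4,3,6,5,5] else [2,2,2,2,2,2,5,3,5,5,5,3,5,5,5])) else (if i < 24 then (if i < 23 then [2,3,2,4,2,6,5,3,5,5,5,3,5,5,5] else [2,5,2,5,2,5,5,3,5,5,5,3,5,5,5]) else (if i < 25 then [3,3,3,4,2,6,3,3,3,5,5,3,5,5,5] else [4,3,6,4,2,6,4,3,6,5,5,3,5,5,5]))))) else (if i < 39 then (if i < 32 then (if i < 29 then (if i < 27 then [3,3,3,5,2,5,3,3,3,5,4,3,6,5,5] else (if i < 28 then [3,5,3,5,2,5,5,3,5,5,4,3,6,5,5] else [4,5,6,4,2,6,4,3,6,5,3,3,3,5,5])) else (if i < 30 then [4,5,6,5,2,5,5,3,5,5,3,3,3,5,5] else (if i < 31 then [2,2,2,2,2,2,3,3,3,6,3,3,3,6,6] else [3,3,3,2,2,2,3,3,3,6,3,3,3,6,6]))) else (if i < 35 then (if i < 33 then [4,5,6,2,2,2,3,3,3,6,3,3,3,6,6] else (if i < 34 then [2,2,2,2,2,2,3,4,5,6,3,4,5,6,6] else [3,3,2,2,6,6,3,4,5,6,3,4,5,6,6])) else (if i < 37 then (if i < 36 then [4,5,2,2,4,5,3,4,5,6,3,4,5,6,6] else [2,2,2,2,2,2,3,6,6,6,3,6,6,6,6]) else (if i < 38 then [2,2,3,2,4,5,3,6,6,6,3,6,6,6,6] else [2,2,6,2,6,6,3,6,6,6,3,6,6,6,6]))))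 else (if i < 45 then (if i < 42 then (if i < 40 then [3,3,3,2,4,5,3,3,3,6,3,6,6,6,6] else (if i < 41 then [4,5,3,2,4,5,3,4,5,6,3,6,6,6,6] else [3,3,3,2,6,6,3,3,3,6,3,4,5,6,6])) else (if i < 43 then [3,3,6,2,6,6,3,6,6,6,3,4,5,6,6] else (if i < 44 then [4,5,6,2,4,5,3,4,5,6,3,3,3,6,6] else [4,5,6,2,6,6,3,6,6,6,3,3,3,6,6]))) else (if i < 48 then (if i < 46 then [2,2,2,2,2,2,4,4,5,4,4,4,5,4,6] else (if i < 47 then [3,2,2,5,6,2,4,4,5,4,4,4,5,4,6] else [4,2,2,4,4,2,4,4,5,4,4,4,5,4,6])) else (if i < 50 then (if i < 49 then [2,2,2,2,2,2,5,4,5,5,5,4,5,5,6] else [2,3,2,4,2,6,5,4,5,5,5,4,5,5,6]) else (if i < 51 then [2,5,2,5,2,5,5,4,5,5,5,4,5,5,6] else [3,3,2,4,6,6,3,4,5,6,5,4,5,5,6])))))) else (if i < 78 then (if i < 65 then (if i < 58 then (if i < 55 then (if i < 53 then [4,3,2,4,4,6,4,4,5,4,5,4,5,5,6] else (if i < 54 then [3,3,2,5,6,6,3,4,5,6,4,4,5,4,6] else [3,5,2,5,6,5,5,4,5,5,4,4,5,4,6])) else (if i < 56 then [4,5,2,4,4,5,4,4,5,4,3,4,5,6,6] else (if i < 57 then [4,5,2,5,4,5,5,4,5,5,3,4,5,6,6] else [2,2,2,2,2,2,4,4,6,4,4,4,6,4,5]))) else (if i < 61 then (if i < 59 then [3,2,2,5,6,2,4,4,6,4,4,4,6,4,5]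 else (if i < 60 then [4,2,2,4,4,2,4,4,6,4,4,4,6,4,5] else [2,2,2,2,2,2,4,6,6,6,4,6,6,6,5])) else (if i < 63 then (if i < 62 then [2,2,3,2,4,5,4,6,6,6,4,6,6,6,5] else [2,2,6,2,6,6,4,6,6,6,4,6,6,6,5]) else (if i < 64 then [3,2,3,5,4,5,4,3,6,5,4,6,6,6,5] else [4,2,3,4,4,5,4,4,6,4,4,6,6,6,5])))) else (if i < 71 then (if i < 68 then (if i < 66 then [3,2,3,5,6,5,4,3,6,5,4,4,6,4,5] else (if i < 67 then [3,2,6,5,6,6,4,6,6,6,4,4,6,4,5] else [4,2,6,4,4,6,4,4,6,4,4,3,6,5,5])) else (if i < 69 then [4,2,6,4,6,6,4,6,6,6,4,3,6,5,5] else (if i < 70 then [2,2,2,2,2,2,5,6,5,5,5,6,5,5,4] else [2,3,2,4,2,6,5,6,5,5,5,6,5,5,4]))) else (if i < 74 then (if i < 72 then [2,5,2,5,2,5,5,6,5,5,5,6,5,5,4] else (if i < 73 then [2,2,2,2,2,2,5,6,6,6,5,6,6,6,4] else [2,2,3,2,4,5,5,6,6,6,5,6,6,6,4])) else (if i < 76 then (if i < 75 then [2,2,6,2,6,6,5,6,6,6,5,6,6,6,4] else [2,3,3,4,4,5,5,6,3,4,5,6,6,6,4]) else (if i < 77 then [2,5,3,5,4,5,5,6,5,5,5,6,6,6,4] else [2,3,3,4,4,6,5,6,3,4,5,6,5,5,4]))))) else (if i < 91 then (if i < 84 then (if i < 81 then (if i < 79 then [2,3,6,4,6,6,5,6,6,6,5,6,5,5,4]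 else (if i < 80 then [2,5,6,5,6,5,5,6,5,5,5,6,3,4,4] else [2,5,6,5,6,6,5,6,6,6,5,6,3,4,4])) else (if i < 82 then [3,3,3,4,4,5,3,3,3,4,5,6,6,6,4] else (if i < 83 then [4,3,3,4,4,5,4,4,3,4,5,6,6,6,4] else [3,3,3,5,4,5,3,3,3,5,4,6,6,6,5]))) else (if i < 87 then (if i < 85 then [3,5,3,5,4,5,5,3,5,5,4,6,6,6,5] else (if i < 86 then [4,5,3,4,4,5,4,4,5,4,3,6,6,6,6] else [4,5,3,5,4,5,5,4,5,5,3,6,6,6,6])) else (if i < 89 then (if i < 88 then [3,3,3,4,4,6,3,3,3,4,5,6,5,5,4] else [4,3,3,4,4,6,4,4,3,4,5,6,5,5,4]) else (if i < 90 then [3,3,3,4,6,6,3,3,3,6,5,4,5,5,6] else [3,3,6,4,6,6,3,6,6,6,5,4,5,5,6])))) else (if i < 98 then (if i < 94 then (if i < 92 then [4,3,6,4,4,6,4,4,6,4,5,3,5,5,5] else (if i < 93 then [4,3,6,4,6,6,4,6,6,6,5,3,5,5,5] else [3,3,3,5,6,5,3,3,3,5,4,4,6,4,5])) else (if i < 96 then (if i < 95 then [3,5,3,5,6,5,5,3,5,5,4,4,6,4,5] else [3,3,3,5,6,6,3,3,3,6,4,4,5,4,6]) else (if i < 97 then [3,3,6,5,6,6,3,6,6,6,4,4,5,4,6] else [3,5,6,5,6,5,5,6,5,5,4,4,3,4,4]))) else (if i < 101 then (if i < 99 then [3,5,6,5,6,6,5,6,6,6,4,4,3,4,4] else (if i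 < 100 then [4,5,6,4,4,5,4,4,5,4,3,3,3,6,6] else [4,5,6,5,4,5,5,4,5,5,3,3,3,6,6])) else (if i < 103 then (if i < 102 then [4,5,6,4,4,6,4,4,6,4,3,3,3,5,5] else [4,5,6,4,6,6,4,6,6,6,3,3,3,5,5]) else (if i < 104 then [4,5,6,5,6,5,5,6,5,5,3,3,3,4,4] else [4,5,6,5,6,6,5,6,6,6,3,3,3,4,4])))))))"

lemma VV_simps [simp]:
  "VV 0 = [2,2,2,2,2,2,3,3,3,4,3,3,3,4,4]"
  "VV 1 = [3,3,3,2,2,2,3,3,3,4,3,3,3,4,4]"
  "VV 2 = [4,5,6,2,2,2,3,3,3,4,3,3,3,4,4]"
  "VV 3 = [2,2,2,2,2,2,4,4,3,4,4,4,3,4,4]"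
  "VV 4 = [3,2,2,5,6,2,4,4,3,4,4,4,3,4,4]"
  "VV 5 = [4,2,2,4,4,2,4,4,3,4,4,4,3,4,4]"
  "VV 6 = [2,2,2,2,2,2,5,6,3,4,5,6,3,4,4]"
  "VV 7 = [2,3,3,4,4,2,5,6,3,4,5,6,3,4,4]"
  "VV 8 = [2,5,6,5,6,2,5,6,3,4,5,6,3,4,4]"
  "VV 9 = [3,3,3,4,4,2,3,3,3,4,5,6,3,4,4]"
  "VV 10 = [4,3,3,4,4,2,4,4,3,4,5,6,3,4,4]"
  "VV 11 = [3,3,3,5,6,2,3,3,3,4,4,4,3,4,4]"
  "VV 12 = [3,5,6,5,6,2,5,6,3,4,4,4,3,4,4]"
  "VV 13 = [4,5,6,4,4,2,4,4,3,4,3,3,3,4,4]"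
  "VV 14 = [4,5,6,5,6,2,5,6,3,4,3,3,3,4,4]"
  "VV 15 = [2,2,2,2,2,2,3,3,3,5,3,3,3,5,5]"
  "VV 16 = [3,3,3,2,2,2,3,3,3,5,3,3,3,5,5]"
  "VV 17 = [4,5,6,2,2,2,3,3,3,5,3,3,3,5,5]"
  "VV 18 = [2,2,2,2,2,2,4,3,6,5,4,3,6,5,5]"
  "VV 19 = [3,2,3,5,2,5,4,3,6,5,4,3,6,5,5]"
  "VV 20 = [4,2,6,4,2,6,4,3,6,5,4,3,6,5,5]"
  "VV 21 = [2,2,2,2,2,2,5,3,5,5,5,3,5,5,5]"
  "VV 22 = [2,3,2,4,2,6,5,3,5,5,5,3,5,5,5]"
  "VV 23 = [2,5,2,5,2,5,5,3,5,5,5,3,5,5,5]"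
  "VV 24 = [3,3,3,4,2,6,3,3,3,5,5,3,5,5,5]"
  "VV 25 = [4,3,6,4,2,6,4,3,6,5,5,3,5,5,5]"
  "VV 26 = [3,3,3,5,2,5,3,3,3,5,4,3,6,5,5]"
  "VV 27 = [3,5,3,5,2,5,5,3,5,5,4,3,6,5,5]"
  "VV 28 = [4,5,6,4,2,6,4,3,6,5,3,3,3,5,5]"
  "VV 29 = [4,5,6,5,2,5,5,3,5,5,3,3,3,5,5]"
  "VV 30 = [2,2,2,2,2,2,3,3,3,6,3,3,3,6,6]"
  "VV 31 = [3,3,3,2,2,2,3,3,3,6,3,3,3,6,6]"
  "VV 32 = [4,5,6,2,2,2,3,3,3,6,3,3,3,6,6]"
  "VV 33 = [2,2,2,2,2,2,3,4,5,6,3,4,5,6,6]"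
  "VV 34 = [3,3,2,2,6,6,3,4,5,6,3,4,5,6,6]"
  "VV 35 = [4,5,2,2,4,5,3,4,5,6,3,4,5,6,6]"
  "VV 36 = [2,2,2,2,2,2,3,6,6,6,3,6,6,6,6]"
  "VV 37 = [2,2,3,2,4,5,3,6,6,6,3,6,6,6,6]"
  "VV 38 = [2,2,6,2,6,6,3,6,6,6,3,6,6,6,6]"
  "VV 39 = [3,3,3,2,4,5,3,3,3,6,3,6,6,6,6]"
  "VV 40 = [4,5,3,2,4,5,3,4,5,6,3,6,6,6,6]"
  "VV 41 = [3,3,3,2,6,6,3,3,3,6,3,4,5,6,6]"
  "VV 42 = [3,3,6,2,6,6,3,6,6,6,3,4,5,6,6]"
  "VV 43 = [4,5,6,2,4,5,3,4,5,6,3,3,3,6,6]"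
  "VV 44 = [4,5,6,2,6,6,3,6,6,6,3,3,3,6,6]"
  "VV 45 = [2,2,2,2,2,2,4,4,5,4,4,4,5,4,6]"
  "VV 46 = [3,2,2,5,6,2,4,4,5,4,4,4,5,4,6]"
  "VV 47 = [4,2,2,4,4,2,4,4,5,4,4,4,5,4,6]"
  "VV 48 = [2,2,2,2,2,2,5,4,5,5,5,4,5,5,6]"
  "VV 49 = [2,3,2,4,2,6,5,4,5,5,5,4,5,5,6]"
  "VV 50 = [2,5,2,5,2,5,5,4,5,5,5,4,5,5,6]"
  "VV 51 = [3,3,2,4,6,6,3,4,5,6,5,4,5,5,6]"
  "VV 52 = [4,3,2,4,4,6,4,4,5,4,5,4,5,5,6]"
  "VV 53 = [3,3,2,5,6,6,3,4,5,6,4,4,5,4,6]"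
  "VV 54 = [3,5,2,5,6,5,5,4,5,5,4,4,5,4,6]"
  "VV 55 = [4,5,2,4,4,5,4,4,5,4,3,4,5,6,6]"
  "VV 56 = [4,5,2,5,4,5,5,4,5,5,3,4,5,6,6]"
  "VV 57 = [2,2,2,2,2,2,4,4,6,4,4,4,6,4,5]"
  "VV 58 = [3,2,2,5,6,2,4,4,6,4,4,4,6,4,5]"
  "VV 59 = [4,2,2,4,4,2,4,4,6,4,4,4,6,4,5]"
  "VV 60 = [2,2,2,2,2,2,4,6,6,6,4,6,6,6,5]"
  "VV 61 = [2,2,3,2,4,5,4,6,6,6,4,6,6,6,5]"
  "VV 62 = [2,2,6,2,6,6,4,6,6,6,4,6,6,6,5]"
  "VV 63 = [3,2,3,5,4,5,4,3,6,5,4,6,6,6,5]"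
  "VV 64 = [4,2,3,4,4,5,4,4,6,4,4,6,6,6,5]"
  "VV 65 = [3,2,3,5,6,5,4,3,6,5,4,4,6,4,5]"
  "VV 66 = [3,2,6,5,6,6,4,6,6,6,4,4,6,4,5]"
  "VV 67 = [4,2,6,4,4,6,4,4,6,4,4,3,6,5,5]"
  "VV 68 = [4,2,6,4,6,6,4,6,6,6,4,3,6,5,5]"
  "VV 69 = [2,2,2,2,2,2,5,6,5,5,5,6,5,5,4]"
  "VV 70 = [2,3,2,4,2,6,5,6,5,5,5,6,5,5,4]"
  "VV 71 = [2,5,2,5,2,5,5,6,5,5,5,6,5,5,4]"
  "VV 72 = [2,2,2,2,2,2,5,6,6,6,5,6,6,6,4]"
  "VV 73 = [2,2,3,2,4,5,5,6,6,6,5,6,6,6,4]"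
  "VV 74 = [2,2,6,2,6,6,5,6,6,6,5,6,6,6,4]"
  "VV 75 = [2,3,3,4,4,5,5,6,3,4,5,6,6,6,4]"
  "VV 76 = [2,5,3,5,4,5,5,6,5,5,5,6,6,6,4]"
  "VV 77 = [2,3,3,4,4,6,5,6,3,4,5,6,5,5,4]"
  "VV 78 = [2,3,6,4,6,6,5,6,6,6,5,6,5,5,4]"
  "VV 79 = [2,5,6,5,6,5,5,6,5,5,5,6,3,4,4]"
  "VV 80 = [2,5,6,5,6,6,5,6,6,6,5,6,3,4,4]"
  "VV 81 = [3,3,3,4,4,5,3,3,3,4,5,6,6,6,4]"
  "VV 82 = [4,3,3,4,4,5,4,4,3,4,5,6,6,6,4]"
  "VV 83 = [3,3,3,5,4,5,3,3,3,5,4,6,6,6,5]"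
  "VV 84 = [3,5,3,5,4,5,5,3,5,5,4,6,6,6,5]"
  "VV 85 = [4,5,3,4,4,5,4,4,5,4,3,6,6,6,6]"
  "VV 86 = [4,5,3,5,4,5,5,4,5,5,3,6,6,6,6]"
  "VV 87 = [3,3,3,4,4,6,3,3,3,4,5,6,5,5,4]"
  "VV 88 = [4,3,3,4,4,6,4,4,3,4,5,6,5,5,4]"
  "VV 89 = [3,3,3,4,6,6,3,3,3,6,5,4,5,5,6]"
  "VV 90 = [3,3,6,4,6,6,3,6,6,6,5,4,5,5,6]"
  "VV 91 = [4,3,6,4,4,6,4,4,6,4,5,3,5,5,5]"
  "VV 92 = [4,3,6,4,6,6,4,6,6,6,5,3,5,5,5]"
  "VV 93 = [3,3,3,5,6,5,3,3,3,5,4,4,6,4,5]"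
  "VV 94 = [3,5,3,5,6,5,5,3,5,5,4,4,6,4,5]"
  "VV 95 = [3,3,3,5,6,6,3,3,3,6,4,4,5,4,6]"
  "VV 96 = [3,3,6,5,6,6,3,6,6,6,4,4,5,4,6]"
  "VV 97 = [3,5,6,5,6,5,5,6,5,5,4,4,3,4,4]"
  "VV 98 = [3,5,6,5,6,6,5,6,6,6,4,4,3,4,4]"
  "VV 99 = [4,5,6,4,4,5,4,4,5,4,3,3,3,6,6]"
  "VV 100 = [4,5,6,5,4,5,5,4,5,5,3,3,3,6,6]"
  "VV 101 = [4,5,6,4,4,6,4,4,6,4,3,3,3,5,5]"
  "VV 102 = [4,5,6,4,6,6,4,6,6,6,3,3,3,5,5]"
  "VV 103 = [4,5,6,5,6,5,5,6,5,5,3,3,3,4,4]"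
  "VV 104 = [4,5,6,5,6,6,5,6,6,6,3,3,3,4,4]"
  "VV (Suc 0) = [3,3,3,2,2,2,3,3,3,4,3,3,3,4,4]"
  by (simp_all add: VV_def)

lemma Tr_lt: "\<forall>i\<in>set [0,1,2,3,4,5,6,7,8,9,10,11,12,13,14,15,16,17,18,19,20,21,22,23,24,25,26,27,28,29,30,31,32,33,34,35,36,37,38,39,40,41,42,43,44,45,46,47,48,49,50,51,52,53,54,55,56,57,58,59,60,61,62,63,64,65,66,67,68,69,70,71,72,73,74,75,76,77,78,79,80,81,82,83,84,85,86,87,88,89,90,91,92,93,94,95,96,97,98,99,100,101,102,103,104]. i < (105::nat)" by simp
lemma TRL6_Tr: "TRL 6 = map Tr [0,1,2,3,4,5,6,7,8,9,10,11,12,13,14,15,16,17,18,19,20,21,22,23,24,25,26,27,28,29,30,31,32,33,34,35,36,37,38,39,40,41,42,43,44,45,46,47,48,49,50,51,52,53,54,55,56,57,58,59,60,61,62,63,64,65,66,67,68,69,70,71,72,73,74,75,76,77,78,79,80,81,82,83,84,85,86,87,88,89,90,91,92,93,94,95,96,97,98,99,100,101,102,103,104]"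
  unfolding TRL6 by simp
lemma vec6: "allb (\<lambda>i. vec 6 (Tr i) = VV i \<and> list_all (\<lambda>p. distinct (fst p) \<and> distinct (snd p)) (Tr i)) 105"
  by (simp add: allb_num vec_def QL6)
definition WA :: "nat \<Rightarrow> (nat \<times> nat) list" where
  "WA i = (if i < 52 then (if i < 26 then (if i < 13 then (if i < 6 then (if i < 3 then (if i < 1 then [] else (if i < 2 then [(2,3)] else [(1,2),(1,3)])) else (if i < 4 then [(3,4)] else (if i < 5 then [(1,2),(1,4),(1,3)] else [(2,4),(2,3)]))) else (if i < 9 then (if i < 7 then [] else (if i < 8 then [(1,3),(2,4)] else [(1,5),(1,3),(2,6),(2,4)])) else (if i < 11 then (if i < 10 then [(2,3),(2,4)] else [(2,4)]) else (if i < 12 then [(2,3)] else [(1,5),(1,2),(1,6),(1,4),(1,3)])))) else (if i < 19 then (if i < 16 then (if i < 14 then [(2,4),(2,3)] else (if i < 15 then [(1,5),(1,2),(1,6),(1,3)] else [(4,5)])) else (if i < 17 then [(2,3),(4,5)] else (if i < 18 then [(1,2),(1,3),(4,5)] else [(4,5)]))) else (if i < 22 then (if i < 20 then [(1,3),(2,5),(2,4)] else (if i < 21 then [(1,4),(1,2),(1,6),(1,5),(1,3)] else [(3,5),(3,4)])) else (if i < 24 then (if i < 23 then [(1,2),(1,5),(1,4),(1,3)] else [(2,5),(2,4),(2,3)]) else (if i < 25 then [(2,3),(4,5)] else [(1,4),(1,3),(2,6),(2,5)]))))) else (if i < 39 then (if i < 32 then (if i < 29 then (if i < 27 then [(2,3),(2,5),(2,4)]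 else (if i < 28 then [(2,5),(2,4)] else [(1,4),(1,5),(1,2),(1,6),(1,3)])) else (if i < 30 then [(2,5),(2,4),(2,3)] else (if i < 31 then [(4,6),(4,5)] else [(2,3),(4,6),(4,5)]))) else (if i < 35 then (if i < 33 then [(1,2),(1,3),(4,6),(4,5)] else (if i < 34 then [(4,6),(4,5)] else [(1,3),(2,6),(2,5),(2,4)])) else (if i < 37 then (if i < 36 then [(1,4),(1,2),(1,5),(1,3)] else [(3,6),(3,5),(3,4)]) else (if i < 38 then [(1,2),(1,6),(1,5),(1,4),(1,3)] else [(2,6),(2,5),(2,4),(2,3)])))) else (if i < 45 then (if i < 42 then (if i < 40 then [(2,3),(4,6),(4,5)] else (if i < 41 then [(1,4),(1,3),(2,5)] else [(2,3),(2,6),(2,5),(2,4)])) else (if i < 43 then [(2,6),(2,5),(2,4)] else (if i < 44 then [(1,4),(1,6),(1,3),(2,5)] else [(2,6),(2,5),(2,4),(2,3)]))) else (if i < 48 then (if i < 46 then [(3,4),(3,5)] else (if i < 47 then [(1,2),(1,4),(1,5),(1,3)] else [(2,4),(2,5),(2,3)])) else (if i < 50 then (if i < 49 then [(3,5)] else [(1,2),(1,5),(1,3)]) else (if i < 51 then [(2,5),(2,3)] else [(1,3),(2,6),(2,5)])))))) else (if i < 78 then (if i < 65 then (if i < 58 then (if i < 55 then (if i < 53 then [(2,4),(2,5),(2,3)] else (if i < 54 then [(1,3),(2,6),(2,4),(2,5)] else [(2,5),(2,3)])) else (if i < 56 then [(2,4),(3,5)] else (if i < 57 then [(2,5),(2,3),(2,4)]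 else [(3,4),(3,6),(3,5)]))) else (if i < 61 then (if i < 59 then [(1,2),(1,4),(1,6),(1,5),(1,3)] else (if i < 60 then [(2,4),(2,6),(2,5),(2,3)] else [(3,6),(3,5)])) else (if i < 63 then (if i < 62 then [(1,2),(1,6),(1,5),(1,3)] else [(2,6),(2,5),(2,3)]) else (if i < 64 then [(1,3),(2,5)] else [(2,4),(2,6),(2,5),(2,3)])))) else (if i < 71 then (if i < 68 then (if i < 66 then [(1,3),(2,5),(4,6)] else (if i < 67 then [(2,6),(2,5),(2,3)] else [(2,4),(3,6),(3,5)])) else (if i < 69 then [(2,6),(2,5),(2,3),(2,4)] else (if i < 70 then [(3,5),(4,6)] else [(1,2),(1,5),(1,3),(4,6)]))) else (if i < 74 then (if i < 72 then [(2,5),(2,3),(4,6)] else (if i < 73 then [(3,6),(3,4),(3,5)] else [(1,2),(1,6),(1,4),(1,5),(1,3)])) else (if i < 76 then (if i < 75 then [(2,6),(2,4),(2,5),(2,3)] else [(1,3),(2,4),(2,5)]) else (if i < 77 then [(2,5),(2,3),(4,6)] else [(1,3),(2,4),(2,6),(2,5)]))))) else (if i < 91 then (if i < 84 then (if i < 81 then (if i < 79 then [(2,6),(2,4),(2,5),(2,3)] else (if i < 80 then [(2,5),(2,3),(2,6),(2,4)] else [(2,6),(2,4),(3,5)])) else (if i < 82 then [(2,3),(2,4),(2,5)] else (if i < 83 then [(2,4),(2,5)] else [(2,3),(2,5)]))) else (if i < 87 then (if i < 85 then [(2,5)] else (if i < 86 then [(2,4),(2,3),(2,5)] else [(2,5),(3,4)]))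 else (if i < 89 then (if i < 88 then [(2,3),(2,4),(2,6),(2,5)] else [(2,4),(2,6),(2,5)]) else (if i < 90 then [(2,3),(2,6),(2,5)] else [(2,6),(2,5)])))) else (if i < 98 then (if i < 94 then (if i < 92 then [(2,4),(2,3),(2,6),(2,5)] else (if i < 93 then [(2,6),(2,5),(3,4)] else [(2,3),(2,5),(4,6)])) else (if i < 96 then (if i < 95 then [(2,5),(4,6)] else [(2,3),(2,6),(2,4),(2,5)]) else (if i < 97 then [(2,6),(2,4),(2,5)] else [(2,5),(3,6),(3,4)]))) else (if i < 101 then (if i < 99 then [(2,6),(2,4),(2,3),(2,5)] else (if i < 100 then [(2,4),(2,6),(2,3),(2,5)] else [(2,5),(3,4),(3,6)])) else (if i < 103 then (if i < 102 then [(2,4),(2,5),(3,6)] else [(2,6),(2,3),(2,4),(2,5)]) else (if i < 104 then [(2,5),(3,6)] else [(2,6),(2,3),(2,5)])))))))"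

lemma WA_simps [simp]:
  "WA 0 = []"
  "WA 1 = [(2,3)]"
  "WA 2 = [(1,2),(1,3)]"
  "WA 3 = [(3,4)]"
  "WA 4 = [(1,2),(1,4),(1,3)]"
  "WA 5 = [(2,4),(2,3)]"
  "WA 6 = []"
  "WA 7 = [(1,3),(2,4)]"
  "WA 8 = [(1,5),(1,3),(2,6),(2,4)]"
  "WA 9 = [(2,3),(2,4)]"
  "WA 10 = [(2,4)]"
  "WA 11 = [(2,3)]"
  "WA 12 = [(1,5),(1,2),(1,6),(1,4),(1,3)]"
  "WA 13 = [(2,4),(2,3)]"
  "WA 14 = [(1,5),(1,2),(1,6),(1,3)]"
  "WA 15 = [(4,5)]"
  "WA 16 = [(2,3),(4,5)]"
  "WA 17 = [(1,2),(1,3),(4,5)]"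
  "WA 18 = [(4,5)]"
  "WA 19 = [(1,3),(2,5),(2,4)]"
  "WA 20 = [(1,4),(1,2),(1,6),(1,5),(1,3)]"
  "WA 21 = [(3,5),(3,4)]"
  "WA 22 = [(1,2),(1,5),(1,4),(1,3)]"
  "WA 23 = [(2,5),(2,4),(2,3)]"
  "WA 24 = [(2,3),(4,5)]"
  "WA 25 = [(1,4),(1,3),(2,6),(2,5)]"
  "WA 26 = [(2,3),(2,5),(2,4)]"
  "WA 27 = [(2,5),(2,4)]"
  "WA 28 = [(1,4),(1,5),(1,2),(1,6),(1,3)]"
  "WA 29 = [(2,5),(2,4),(2,3)]"
  "WA 30 = [(4,6),(4,5)]"
  "WA 31 = [(2,3),(4,6),(4,5)]"
  "WA 32 = [(1,2),(1,3),(4,6),(4,5)]"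
  "WA 33 = [(4,6),(4,5)]"
  "WA 34 = [(1,3),(2,6),(2,5),(2,4)]"
  "WA 35 = [(1,4),(1,2),(1,5),(1,3)]"
  "WA 36 = [(3,6),(3,5),(3,4)]"
  "WA 37 = [(1,2),(1,6),(1,5),(1,4),(1,3)]"
  "WA 38 = [(2,6),(2,5),(2,4),(2,3)]"
  "WA 39 = [(2,3),(4,6),(4,5)]"
  "WA 40 = [(1,4),(1,3),(2,5)]"
  "WA 41 = [(2,3),(2,6),(2,5),(2,4)]"
  "WA 42 = [(2,6),(2,5),(2,4)]"
  "WA 43 = [(1,4),(1,6),(1,3),(2,5)]"
  "WA 44 = [(2,6),(2,5),(2,4),(2,3)]"
  "WA 45 = [(3,4),(3,5)]"
  "WA 46 = [(1,2),(1,4),(1,5),(1,3)]"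
  "WA 47 = [(2,4),(2,5),(2,3)]"
  "WA 48 = [(3,5)]"
  "WA 49 = [(1,2),(1,5),(1,3)]"
  "WA 50 = [(2,5),(2,3)]"
  "WA 51 = [(1,3),(2,6),(2,5)]"
  "WA 52 = [(2,4),(2,5),(2,3)]"
  "WA 53 = [(1,3),(2,6),(2,4),(2,5)]"
  "WA 54 = [(2,5),(2,3)]"
  "WA 55 = [(2,4),(3,5)]"
  "WA 56 = [(2,5),(2,3),(2,4)]"
  "WA 57 = [(3,4),(3,6),(3,5)]"
  "WA 58 = [(1,2),(1,4),(1,6),(1,5),(1,3)]"
  "WA 59 = [(2,4),(2,6),(2,5),(2,3)]"
  "WA 60 = [(3,6),(3,5)]"
  "WA 61 = [(1,2),(1,6),(1,5),(1,3)]"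
  "WA 62 = [(2,6),(2,5),(2,3)]"
  "WA 63 = [(1,3),(2,5)]"
  "WA 64 = [(2,4),(2,6),(2,5),(2,3)]"
  "WA 65 = [(1,3),(2,5),(4,6)]"
  "WA 66 = [(2,6),(2,5),(2,3)]"
  "WA 67 = [(2,4),(3,6),(3,5)]"
  "WA 68 = [(2,6),(2,5),(2,3),(2,4)]"
  "WA 69 = [(3,5),(4,6)]"
  "WA 70 = [(1,2),(1,5),(1,3),(4,6)]"
  "WA 71 = [(2,5),(2,3),(4,6)]"
  "WA 72 = [(3,6),(3,4),(3,5)]"
  "WA 73 = [(1,2),(1,6),(1,4),(1,5),(1,3)]"
  "WA 74 = [(2,6),(2,4),(2,5),(2,3)]"
  "WA 75 = [(1,3),(2,4),(2,5)]"
  "WA 76 = [(2,5),(2,3),(4,6)]"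
  "WA 77 = [(1,3),(2,4),(2,6),(2,5)]"
  "WA 78 = [(2,6),(2,4),(2,5),(2,3)]"
  "WA 79 = [(2,5),(2,3),(2,6),(2,4)]"
  "WA 80 = [(2,6),(2,4),(3,5)]"
  "WA 81 = [(2,3),(2,4),(2,5)]"
  "WA 82 = [(2,4),(2,5)]"
  "WA 83 = [(2,3),(2,5)]"
  "WA 84 = [(2,5)]"
  "WA 85 = [(2,4),(2,3),(2,5)]"
  "WA 86 = [(2,5),(3,4)]"
  "WA 87 = [(2,3),(2,4),(2,6),(2,5)]"
  "WA 88 = [(2,4),(2,6),(2,5)]"
  "WA 89 = [(2,3),(2,6),(2,5)]"
  "WA 90 = [(2,6),(2,5)]"
  "WA 91 = [(2,4),(2,3),(2,6),(2,5)]"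
  "WA 92 = [(2,6),(2,5),(3,4)]"
  "WA 93 = [(2,3),(2,5),(4,6)]"
  "WA 94 = [(2,5),(4,6)]"
  "WA 95 = [(2,3),(2,6),(2,4),(2,5)]"
  "WA 96 = [(2,6),(2,4),(2,5)]"
  "WA 97 = [(2,5),(3,6),(3,4)]"
  "WA 98 = [(2,6),(2,4),(2,3),(2,5)]"
  "WA 99 = [(2,4),(2,6),(2,3),(2,5)]"
  "WA 100 = [(2,5),(3,4),(3,6)]"
  "WA 101 = [(2,4),(2,5),(3,6)]"
  "WA 102 = [(2,6),(2,3),(2,4),(2,5)]"
  "WA 103 = [(2,5),(3,6)]"
  "WA 104 = [(2,6),(2,3),(2,5)]"
  "WA (Suc 0) = [(2,3)]"
  by (simp_all add: WA_def)

definition RA :: "nat \<Rightarrow> nat" where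
  "RA i = (if i < 52 then (if i < 26 then (if i < 13 then (if i < 6 then (if i < 3 then (if i < 1 then 0 else (if i < 2 then 0 else 0)) else (if i < 4 then 0 else (if i < 5 then 0 else 0))) else (if i < 9 then (if i < 7 then 6 else (if i < 8 then 0 else 0)) else (if i < 11 then (if i < 10 then 0 else 0) else (if i < 12 then 6 else 0)))) else (if i < 19 then (if i < 16 then (if i < 14 then 6 else (if i < 15 then 0 else 0)) else (if i < 17 then 0 else (if i < 18 then 0 else 6))) else (if i < 22 then (if i < 20 then 0 else (if i < 21 then 0 else 0)) else (if i < 24 then (if i < 23 then 0 else 0) else (if i < 25 then 6 else 0))))) else (if i < 39 then (if i < 32 then (if i < 29 then (if i < 27 then 0 else (if i < 28 then 0 else 0)) else (if i < 30 then 6 else (if i < 31 then 0 else 0))) else (if i < 35 then (if i < 33 then 0 else (if i < 34 then 6 else 0)) else (if i < 37 then (if i < 36 then 0 else 0) else (if i < 38 then 0 else 0)))) else (if i < 45 then (if i < 42 then (if i < 40 then 6 else (if i < 41 then 0 else 0)) else (if i < 43 then 0 else (if i < 44 then 0 else 6))) else (if i < 48 then (if i < 46 then 0 else (if i < 47 then 0 else 0)) else (if i < 50 then (if i < 49 then 0 else 0) else (if i < 51 then 0 else 0)))))) else (if i < 78 then (if i < 65 then (if i < 58 then (if i < 55 then (if i < 53 then 6 else (if i < 54 then 0 else 6)) else (if i < 56 then 0 else (if i < 57 then 0 else 0))) else (if i < 61 then (if i < 59 then 0 else (if i < 60 then 0 else 0)) else (if i < 63 then (if i < 62 then 0 else 0)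 else (if i < 64 then 0 else 6)))) else (if i < 71 then (if i < 68 then (if i < 66 then 0 else (if i < 67 then 6 else 0)) else (if i < 69 then 0 else (if i < 70 then 0 else 0))) else (if i < 74 then (if i < 72 then 0 else (if i < 73 then 0 else 0)) else (if i < 76 then (if i < 75 then 0 else 0) else (if i < 77 then 6 else 0))))) else (if i < 91 then (if i < 84 then (if i < 81 then (if i < 79 then 6 else (if i < 80 then 0 else 0)) else (if i < 82 then 0 else (if i < 83 then 0 else 0))) else (if i < 87 then (if i < 85 then 0 else (if i < 86 then 0 else 0)) else (if i < 89 then (if i < 88 then 0 else 0) else (if i < 90 then 0 else 0)))) else (if i < 98 then (if i < 94 then (if i < 92 then 0 else (if i < 93 then 0 else 0)) else (if i < 96 then (if i < 95 then 0 else 0) else (if i < 97 then 0 else 0))) else (if i < 101 then (if i < 99 then 0 else (if i < 100 then 0 else 0)) else (if i < 103 then (if i < 102 then 0 else 0) else (if i < 104 then 0 else 0)))))))"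

lemma RA_simps [simp]:
  "RA 0 = 0"
  "RA 1 = 0"
  "RA 2 = 0"
  "RA 3 = 0"
  "RA 4 = 0"
  "RA 5 = 0"
  "RA 6 = 6"
  "RA 7 = 0"
  "RA 8 = 0"
  "RA 9 = 0"
  "RA 10 = 0"
  "RA 11 = 6"
  "RA 12 = 0"
  "RA 13 = 6"
  "RA 14 = 0"
  "RA 15 = 0"
  "RA 16 = 0"
  "RA 17 = 0"
  "RA 18 = 6"
  "RA 19 = 0"
  "RA 20 = 0"
  "RA 21 = 0"
  "RA 22 = 0"
  "RA 23 = 0"
  "RA 24 = 6"
  "RA 25 = 0"
  "RA 26 = 0"
  "RA 27 = 0"
  "RA 28 = 0"
  "RA 29 = 6"
  "RA 30 = 0"
  "RA 31 = 0"
  "RA 32 = 0"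
  "RA 33 = 6"
  "RA 34 = 0"
  "RA 35 = 0"
  "RA 36 = 0"
  "RA 37 = 0"
  "RA 38 = 0"
  "RA 39 = 6"
  "RA 40 = 0"
  "RA 41 = 0"
  "RA 42 = 0"
  "RA 43 = 0"
  "RA 44 = 6"
  "RA 45 = 0"
  "RA 46 = 0"
  "RA 47 = 0"
  "RA 48 = 0"
  "RA 49 = 0"
  "RA 50 = 0"
  "RA 51 = 0"
  "RA 52 = 6"
  "RA 53 = 0"
  "RA 54 = 6"
  "RA 55 = 0"
  "RA 56 = 0"
  "RA 57 = 0"
  "RA 58 = 0"
  "RA 59 = 0"
  "RA 60 = 0"
  "RA 61 = 0"
  "RA 62 = 0"
  "RA 63 = 0"
  "RA 64 = 6"
  "RA 65 = 0"
  "RA 66 = 6"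
  "RA 67 = 0"
  "RA 68 = 0"
  "RA 69 = 0"
  "RA 70 = 0"
  "RA 71 = 0"
  "RA 72 = 0"
  "RA 73 = 0"
  "RA 74 = 0"
  "RA 75 = 0"
  "RA 76 = 6"
  "RA 77 = 0"
  "RA 78 = 6"
  "RA 79 = 0"
  "RA 80 = 0"
  "RA 81 = 0"
  "RA 82 = 0"
  "RA 83 = 0"
  "RA 84 = 0"
  "RA 85 = 0"
  "RA 86 = 0"
  "RA 87 = 0"
  "RA 88 = 0"
  "RA 89 = 0"
  "RA 90 = 0"
  "RA 91 = 0"
  "RA 92 = 0"
  "RA 93 = 0"
  "RA 94 = 0"
  "RA 95 = 0"
  "RA 96 = 0"
  "RA 97 = 0"
  "RA 98 = 0"
  "RA 99 = 0"
  "RA 100 = 0"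
  "RA 101 = 0"
  "RA 102 = 0"
  "RA 103 = 0"
  "RA 104 = 0"
  "RA (Suc 0) = 0"
  by (simp_all add: RA_def)

definition WB0 :: "nat \<Rightarrow> (nat \<times> nat) list" where
  "WB0 i = (if i < 52 then (if i < 26 then (if i < 13 then (if i < 6 then (if i < 3 then (if i < 1 then [] else (if i < 2 then [] else [(1,2)])) else (if i < 4 then [] else (if i < 5 then [] else [(1,2)]))) else (if i < 9 then (if i < 7 then [] else (if i < 8 then [] else [(1,2)])) else (if i < 11 then (if i < 10 then [] else []) else (if i < 12 then [] else [(1,2)])))) else (if i < 19 then (if i < 16 then (if i < 14 then [(1,2)] else (if i < 15 then [(1,2)] else [(1,6),(1,2),(1,5),(3,4)])) else (if i < 17 then [] else (if i < 18 then [(1,2)] else [(1,6),(1,2),(1,5),(3,4)]))) else (if i < 22 then (if i < 20 then [] else (if i < 21 then [(1,2)] else [(1,6),(1,2),(1,5),(3,4)])) else (if i < 24 then (if i < 23 then [] else [(1,2)]) else (if i < 25 then [] else []))))) else (if i < 39 then (if i < 32 then (if i < 29 then (if i < 27 then [] else (if i < 28 then [(1,2)] else [(1,2)])) else (if i < 30 then [(1,2)] else (if i < 31 then [(1,5),(2,6),(3,4)] else [(5,6)]))) else (if i < 35 then (if i < 33 then [(1,2),(5,6)] else (if i < 34 then [(1,5),(2,6),(3,4)] else [(5,6)])) else (if i < 37 then (if i < 36 then [(1,2),(5,6)] else [(1,5),(2,6),(3,4)]) else (if i < 38 then [(5,6)] else [(1,2),(5,6)])))) else (if i < 45 then (if i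 < 42 then (if i < 40 then [(5,6)] else (if i < 41 then [(5,6)] else [(5,6)])) else (if i < 43 then [(1,2),(5,6)] else (if i < 44 then [(1,2),(5,6)] else [(1,2),(5,6)]))) else (if i < 48 then (if i < 46 then [(1,5),(2,6),(3,4)] else (if i < 47 then [] else [(1,2)])) else (if i < 50 then (if i < 49 then [(1,6),(1,2),(1,5),(3,4)] else []) else (if i < 51 then [(1,2)] else [])))))) else (if i < 78 then (if i < 65 then (if i < 58 then (if i < 55 then (if i < 53 then [] else (if i < 54 then [] else [(1,2)])) else (if i < 56 then [(1,2)] else (if i < 57 then [(1,2)] else [(1,6),(1,2),(1,5),(3,4)]))) else (if i < 61 then (if i < 59 then [(5,6)] else (if i < 60 then [(1,2),(5,6)] else [(1,5),(2,6),(3,4)])) else (if i < 63 then (if i < 62 then [(5,6)] else [(1,2),(5,6)]) else (if i < 64 then [(5,6)] else [(5,6)])))) else (if i < 71 then (if i < 68 then (if i < 66 then [(5,6)] else (if i < 67 then [(1,2),(5,6)] else [(1,2),(5,6)])) else (if i < 69 then [(1,2),(5,6)] else (if i < 70 then [(1,6),(1,2),(1,5),(3,4)] else []))) else (if i < 74 then (if i < 72 then [(1,2)] else (if i < 73 then [(1,5),(2,6),(3,4)] else [(5,6)])) else (if i < 76 then (if i < 75 then [(1,2),(5,6)] else [(1,5),(1,2),(1,6),(3,4)]) else (if i < 77 then [] else [(1,6),(2,5),(3,4)]))))) else (if i < 91 then (if i < 84 then (if i < 81 then (if i < 79 then [(5,6)] else (if i < 80 then [(1,6),(1,2),(1,5),(3,4)]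 else [(1,5),(2,6),(3,4)])) else (if i < 82 then [(1,5),(1,2),(1,6),(3,4)] else (if i < 83 then [(1,5),(1,2),(1,6),(3,4)] else [(1,5),(1,2),(1,6),(3,4)]))) else (if i < 87 then (if i < 85 then [] else (if i < 86 then [(1,5),(1,2),(1,6),(3,4)] else [(1,2),(5,6)])) else (if i < 89 then (if i < 88 then [(1,6),(2,5),(3,4)] else [(1,6),(2,5),(3,4)]) else (if i < 90 then [(1,6),(2,5),(3,4)] else [(5,6)])))) else (if i < 98 then (if i < 94 then (if i < 92 then [(1,6),(2,5),(3,4)] else (if i < 93 then [(1,2)] else [(1,6),(2,5),(3,4)])) else (if i < 96 then (if i < 95 then [(1,6),(1,2),(1,5),(3,4)] else [(1,5),(1,2),(1,6),(3,4)]) else (if i < 97 then [(1,5),(2,6),(3,4)] else [(1,6),(1,2),(1,5),(3,4)]))) else (if i < 101 then (if i < 99 then [(1,5),(2,6),(3,4)] else (if i < 100 then [(1,5),(2,6),(3,4)] else [(1,6),(1,2),(1,5),(3,4)])) else (if i < 103 then (if i < 102 then [(1,6),(1,2),(1,5),(3,4)] else [(1,5),(2,6),(3,4)]) else (if i < 104 then [(1,6),(1,2),(1,5),(3,4)] else [(1,5),(2,6),(3,4)])))))))"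

lemma WB0_simps [simp]:
  "WB0 0 = []"
  "WB0 1 = []"
  "WB0 2 = [(1,2)]"
  "WB0 3 = []"
  "WB0 4 = []"
  "WB0 5 = [(1,2)]"
  "WB0 6 = []"
  "WB0 7 = []"
  "WB0 8 = [(1,2)]"
  "WB0 9 = []"
  "WB0 10 = []"
  "WB0 11 = []"
  "WB0 12 = [(1,2)]"
  "WB0 13 = [(1,2)]"
  "WB0 14 = [(1,2)]"
  "WB0 15 = [(1,6),(1,2),(1,5),(3,4)]"
  "WB0 16 = []"
  "WB0 17 = [(1,2)]"
  "WB0 18 = [(1,6),(1,2),(1,5),(3,4)]"
  "WB0 19 = []"
  "WB0 20 = [(1,2)]"
  "WB0 21 = [(1,6),(1,2),(1,5),(3,4)]"
  "WB0 22 = []"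
  "WB0 23 = [(1,2)]"
  "WB0 24 = []"
  "WB0 25 = []"
  "WB0 26 = []"
  "WB0 27 = [(1,2)]"
  "WB0 28 = [(1,2)]"
  "WB0 29 = [(1,2)]"
  "WB0 30 = [(1,5),(2,6),(3,4)]"
  "WB0 31 = [(5,6)]"
  "WB0 32 = [(1,2),(5,6)]"
  "WB0 33 = [(1,5),(2,6),(3,4)]"
  "WB0 34 = [(5,6)]"
  "WB0 35 = [(1,2),(5,6)]"
  "WB0 36 = [(1,5),(2,6),(3,4)]"
  "WB0 37 = [(5,6)]"
  "WB0 38 = [(1,2),(5,6)]"
  "WB0 39 = [(5,6)]"
  "WB0 40 = [(5,6)]"
  "WB0 41 = [(5,6)]"
  "WB0 42 = [(1,2),(5,6)]"
  "WB0 43 = [(1,2),(5,6)]"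
  "WB0 44 = [(1,2),(5,6)]"
  "WB0 45 = [(1,5),(2,6),(3,4)]"
  "WB0 46 = []"
  "WB0 47 = [(1,2)]"
  "WB0 48 = [(1,6),(1,2),(1,5),(3,4)]"
  "WB0 49 = []"
  "WB0 50 = [(1,2)]"
  "WB0 51 = []"
  "WB0 52 = []"
  "WB0 53 = []"
  "WB0 54 = [(1,2)]"
  "WB0 55 = [(1,2)]"
  "WB0 56 = [(1,2)]"
  "WB0 57 = [(1,6),(1,2),(1,5),(3,4)]"
  "WB0 58 = [(5,6)]"
  "WB0 59 = [(1,2),(5,6)]"
  "WB0 60 = [(1,5),(2,6),(3,4)]"
  "WB0 61 = [(5,6)]"
  "WB0 62 = [(1,2),(5,6)]"
  "WB0 63 = [(5,6)]"
  "WB0 64 = [(5,6)]"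
  "WB0 65 = [(5,6)]"
  "WB0 66 = [(1,2),(5,6)]"
  "WB0 67 = [(1,2),(5,6)]"
  "WB0 68 = [(1,2),(5,6)]"
  "WB0 69 = [(1,6),(1,2),(1,5),(3,4)]"
  "WB0 70 = []"
  "WB0 71 = [(1,2)]"
  "WB0 72 = [(1,5),(2,6),(3,4)]"
  "WB0 73 = [(5,6)]"
  "WB0 74 = [(1,2),(5,6)]"
  "WB0 75 = [(1,5),(1,2),(1,6),(3,4)]"
  "WB0 76 = []"
  "WB0 77 = [(1,6),(2,5),(3,4)]"
  "WB0 78 = [(5,6)]"
  "WB0 79 = [(1,6),(1,2),(1,5),(3,4)]"
  "WB0 80 = [(1,5),(2,6),(3,4)]"
  "WB0 81 = [(1,5),(1,2),(1,6),(3,4)]"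
  "WB0 82 = [(1,5),(1,2),(1,6),(3,4)]"
  "WB0 83 = [(1,5),(1,2),(1,6),(3,4)]"
  "WB0 84 = []"
  "WB0 85 = [(1,5),(1,2),(1,6),(3,4)]"
  "WB0 86 = [(1,2),(5,6)]"
  "WB0 87 = [(1,6),(2,5),(3,4)]"
  "WB0 88 = [(1,6),(2,5),(3,4)]"
  "WB0 89 = [(1,6),(2,5),(3,4)]"
  "WB0 90 = [(5,6)]"
  "WB0 91 = [(1,6),(2,5),(3,4)]"
  "WB0 92 = [(1,2)]"
  "WB0 93 = [(1,6),(2,5),(3,4)]"
  "WB0 94 = [(1,6),(1,2),(1,5),(3,4)]"
  "WB0 95 = [(1,5),(1,2),(1,6),(3,4)]"
  "WB0 96 = [(1,5),(2,6),(3,4)]"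
  "WB0 97 = [(1,6),(1,2),(1,5),(3,4)]"
  "WB0 98 = [(1,5),(2,6),(3,4)]"
  "WB0 99 = [(1,5),(2,6),(3,4)]"
  "WB0 100 = [(1,6),(1,2),(1,5),(3,4)]"
  "WB0 101 = [(1,6),(1,2),(1,5),(3,4)]"
  "WB0 102 = [(1,5),(2,6),(3,4)]"
  "WB0 103 = [(1,6),(1,2),(1,5),(3,4)]"
  "WB0 104 = [(1,5),(2,6),(3,4)]"
  "WB0 (Suc 0) = []"
  by (simp_all add: WB0_def)

definition BB0 :: "nat \<Rightarrow> nat" where
  "BB0 i = (if i < 52 then (if i < 26 then (if i < 13 then (if i < 6 then (if i < 3 then (if i < 1 then 0 else (if i < 2 then 1 else 1)) else (if i < 4 then 3 else (if i < 5 then 4 else 4))) else (if i < 9 then (if i < 7 then 6 else (if i < 8 then 7 else 7)) else (if i < 11 then (if i < 10 then 9 else 10) else (if i < 12 then 11 else 10)))) else (if i < 19 then (if i < 16 then (if i < 14 then 11 else (if i < 15 then 9 else 1)) else (if i < 17 then 16 else (if i < 18 then 16 else 11))) else (if i < 22 then (if i < 20 then 19 else (if i < 21 then 19 else 9)) else (if i < 24 then (if i < 23 then 22 else 22) else (if i < 25 then 24 else 25))))) else (if i < 39 then (if i < 32 then (if i < 29 then (if i < 27 then 26 else (if i < 28 then 25 else 26)) else (if i < 30 then 24 else (if i < 31 then 1 else 16))) else (if i < 35 then (if i < 33 then 16 else (if i < 34 then 11 else 19)) else (if i < 37 then (if i < 36 then 19 else 9) else (if i < 38 then 22 else 22))))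 else (if i < 45 then (if i < 42 then (if i < 40 then 24 else (if i < 41 then 25 else 26)) else (if i < 43 then 25 else (if i < 44 then 26 else 24))) else (if i < 48 then (if i < 46 then 4 else (if i < 47 then 46 else 46)) else (if i < 50 then (if i < 49 then 10 else 49) else (if i < 51 then 49 else 51)))))) else (if i < 78 then (if i < 65 then (if i < 58 then (if i < 55 then (if i < 53 then 52 else (if i < 54 then 53 else 52)) else (if i < 56 then 53 else (if i < 57 then 51 else 4))) else (if i < 61 then (if i < 59 then 46 else (if i < 60 then 46 else 10)) else (if i < 63 then (if i < 62 then 49 else 49) else (if i < 64 then 51 else 52)))) else (if i < 71 then (if i < 68 then (if i < 66 then 53 else (if i < 67 then 52 else 53)) else (if i < 69 then 51 else (if i < 70 then 7 else 70))) else (if i < 74 then (if i < 72 then 70 else (if i < 73 then 7 else 70)) else (if i < 76 then (if i < 75 then 70 else 70) else (if i < 77 then 76 else 70))))) else (if i < 91 then (if i < 84 then (if i < 81 then (if i < 79 then 76 else (if i < 80 then 70 else 70)) else (if i < 82 then 22 else (if i < 83 then 49 else 25))) else (if i < 87 then (if i < 85 then 84 else (if i < 86 then 51 else 84)) else (if i < 89 then (if i < 88 then 22 else 49) else (if i < 90 then 25 else 84)))) else (if i < 98 then (if i < 94 then (if i < 92 then 51 else (if i < 93 then 84 else 19)) else (if i < 96 then (if i < 95 then 51 else 19) else (if i < 97 then 51 else 49))) else (if i < 101 then (if i < 99 then 49 else (if i < 100 then 19 else 25)) else (if i < 103 then (if i < 102 then 19 else 25) else (if i < 104 then 22 else 2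2)))))))"

lemma BB0_simps [simp]:
  "BB0 0 = 0"
  "BB0 1 = 1"
  "BB0 2 = 1"
  "BB0 3 = 3"
  "BB0 4 = 4"
  "BB0 5 = 4"
  "BB0 6 = 6"
  "BB0 7 = 7"
  "BB0 8 = 7"
  "BB0 9 = 9"
  "BB0 10 = 10"
  "BB0 11 = 11"
  "BB0 12 = 10"
  "BB0 13 = 11"
  "BB0 14 = 9"
  "BB0 15 = 1"
  "BB0 16 = 16"
  "BB0 17 = 16"
  "BB0 18 = 11"
  "BB0 19 = 19"
  "BB0 20 = 19"
  "BB0 21 = 9"
  "BB0 22 = 22"
  "BB0 23 = 22"
  "BB0 24 = 24"
  "BB0 25 = 25"
  "BB0 26 = 26"
  "BB0 27 = 25"
  "BB0 28 = 26"
  "BB0 29 = 24"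
  "BB0 30 = 1"
  "BB0 31 = 16"
  "BB0 32 = 16"
  "BB0 33 = 11"
  "BB0 34 = 19"
  "BB0 35 = 19"
  "BB0 36 = 9"
  "BB0 37 = 22"
  "BB0 38 = 22"
  "BB0 39 = 24"
  "BB0 40 = 25"
  "BB0 41 = 26"
  "BB0 42 = 25"
  "BB0 43 = 26"
  "BB0 44 = 24"
  "BB0 45 = 4"
  "BB0 46 = 46"
  "BB0 47 = 46"
  "BB0 48 = 10"
  "BB0 49 = 49"
  "BB0 50 = 49"
  "BB0 51 = 51"
  "BB0 52 = 52"
  "BB0 53 = 53"
  "BB0 54 = 52"
  "BB0 55 = 53"
  "BB0 56 = 51"
  "BB0 57 = 4"
  "BB0 58 = 46"
  "BB0 59 = 46"
  "BB0 60 = 10"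
  "BB0 61 = 49"
  "BB0 62 = 49"
  "BB0 63 = 51"
  "BB0 64 = 52"
  "BB0 65 = 53"
  "BB0 66 = 52"
  "BB0 67 = 53"
  "BB0 68 = 51"
  "BB0 69 = 7"
  "BB0 70 = 70"
  "BB0 71 = 70"
  "BB0 72 = 7"
  "BB0 73 = 70"
  "BB0 74 = 70"
  "BB0 75 = 70"
  "BB0 76 = 76"
  "BB0 77 = 70"
  "BB0 78 = 76"
  "BB0 79 = 70"
  "BB0 80 = 70"
  "BB0 81 = 22"
  "BB0 82 = 49"
  "BB0 83 = 25"
  "BB0 84 = 84"
  "BB0 85 = 51"
  "BB0 86 = 84"
  "BB0 87 = 22"
  "BB0 88 = 49"
  "BB0 89 = 25"
  "BB0 90 = 84"
  "BB0 91 = 51"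
  "BB0 92 = 84"
  "BB0 93 = 19"
  "BB0 94 = 51"
  "BB0 95 = 19"
  "BB0 96 = 51"
  "BB0 97 = 49"
  "BB0 98 = 49"
  "BB0 99 = 19"
  "BB0 100 = 25"
  "BB0 101 = 19"
  "BB0 102 = 25"
  "BB0 103 = 22"
  "BB0 104 = 22"
  "BB0 (Suc 0) = 1"
  by (simp_all add: BB0_def)

definition WB6 :: "nat \<Rightarrow> (nat \<times> nat) list" where
  "WB6 i = (if i < 52 then (if i < 26 then (if i < 13 then (if i < 6 then (if i < 3 then (if i < 1 then [] else (if i < 2 then [] else [(1,2)])) else (if i < 4 then [(3,4)] else (if i < 5 then [(1,2),(3,4)] else [(3,4)]))) else (if i < 9 then (if i < 7 then [] else (if i < 8 then [(1,3),(2,4)] else [(1,5),(1,3),(2,6),(2,4)])) else (if i < 11 then (if i < 10 then [(1,3),(2,4)] else [(1,4),(1,2),(1,3)]) else (if i < 12 then [] else [(1,4),(2,3)])))) else (if i < 19 then (if i < 16 then (if i < 14 then [(3,4)] else (if i < 15 then [(1,3),(1,2),(1,4)] else [(1,6),(1,2),(1,5),(3,4)])) else (if i < 17 then [] else (if i < 18 then [(1,2)] else [(1,3),(1,5),(2,4),(2,6)]))) else (if i < 22 then (if i < 20 then [] else (if i < 21 then [(3,4),(5,6)] else [(1,4),(1,5),(2,3),(2,6)])) else (if i < 24 then (if i < 23 then [(1,2),(3,5),(4,6)] else [(3,5),(4,6)]) else (if i < 25 then [] else []))))) else (if i < 39 then (if i < 32 then (if i < 29 then (if i < 27 then [(1,2),(3,5),(4,6)]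 else (if i < 28 then [(1,2)] else [(3,5),(4,6)])) else (if i < 30 then [(3,5),(4,6)] else (if i < 31 then [(1,5),(2,6),(3,4)] else [(5,6)]))) else (if i < 35 then (if i < 33 then [(1,2),(5,6)] else (if i < 34 then [(1,3),(1,6),(1,2),(1,4),(1,5)] else [(5,6)])) else (if i < 37 then (if i < 36 then [(3,4)] else [(1,4),(1,6),(1,2),(1,3),(1,5)]) else (if i < 38 then [(1,2),(3,6),(3,4),(3,5)] else [(3,6),(3,4),(3,5)])))) else (if i < 45 then (if i < 42 then (if i < 40 then [(5,6)] else (if i < 41 then [(5,6)] else [(1,2),(3,6),(3,4),(3,5)])) else (if i < 43 then [(1,2),(5,6)] else (if i < 44 then [(3,6),(3,4),(3,5)] else [(3,6),(3,4),(3,5)]))) else (if i < 48 then (if i < 46 then [(1,6),(1,2),(1,5)] else (if i < 47 then [(1,2),(3,4)] else [(3,4)])) else (if i < 50 then (if i < 49 then [(1,3),(1,6),(1,2),(1,4),(1,5)] else [(1,2),(3,5),(3,4),(3,6)]) else (if i < 51 then [(3,5),(3,4),(3,6)] else [(3,4)])))))) else (if i < 78 then (if i < 65 then (if i < 58 then (if i < 55 then (if i < 53 then [(3,4)] else (if i < 54 then [(3,5),(3,4),(3,6)] else [(3,5),(3,4),(3,6)])) else (if i < 56 then [(1,2),(3,5),(3,4),(3,6)] else (if i < 57 then [(1,2),(3,4)] else [(1,5),(2,6)]))) else (if i < 61 then (if i < 59 then [(1,2),(3,4),(5,6)] else (if i < 60 then [(3,4),(5,6)] else [(1,3),(1,5),(2,4),(2,6)]))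 else (if i < 63 then (if i < 62 then [(1,2),(3,6),(4,5)] else [(3,6),(4,5)]) else (if i < 64 then [(3,4),(5,6)] else [(3,4),(5,6)])))) else (if i < 71 then (if i < 68 then (if i < 66 then [(3,6),(4,5)] else (if i < 67 then [(3,6),(4,5)] else [(1,2),(3,6),(4,5)])) else (if i < 69 then [(1,2),(3,4),(5,6)] else (if i < 70 then [(3,5),(4,6)] else [(1,2),(3,5),(4,6)]))) else (if i < 74 then (if i < 72 then [(3,5),(4,6)] else (if i < 73 then [(3,6),(3,4),(3,5)] else [(1,2),(3,6),(3,4),(3,5)])) else (if i < 76 then (if i < 75 then [(3,6),(3,4),(3,5)] else [(1,6),(1,4),(2,5),(2,3)]) else (if i < 77 then [(3,5),(4,6)] else [(1,5),(1,3),(1,2),(1,6),(1,4)]))))) else (if i < 91 then (if i < 84 then (if i < 81 then (if i < 79 then [(3,6),(3,4),(3,5)] else (if i < 80 then [(1,5),(1,3),(2,6),(2,4)] else [(1,6),(1,4),(1,2),(1,5),(1,3)])) else (if i < 82 then [(1,3),(2,4)] else (if i < 83 then [(1,4),(1,2),(1,3)] else [(1,4),(1,6),(1,2),(1,3),(1,5)]))) else (if i < 87 then (if i < 85 then [(1,3),(2,4)] else (if i < 86 then [(1,3),(1,5),(2,4),(2,6)] else [(1,4),(1,2),(1,3)])) else (if i < 89 then (if i < 88 then [(1,3),(2,4),(5,6)] else [(1,4),(1,2),(1,3),(5,6)]) else (if i < 90 then [(1,4),(1,5),(2,3),(2,6)] else [(1,3),(2,4),(5,6)])))) else (if i < 98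 then (if i < 94 then (if i < 92 then [(1,3),(1,6),(1,2),(1,4),(1,5)] else (if i < 93 then [(1,4),(1,2),(1,3),(5,6)] else [(1,5),(1,3),(2,6),(2,4)])) else (if i < 96 then (if i < 95 then [(1,6),(1,2),(1,5)] else [(1,6),(1,4),(1,2),(1,5),(1,3)]) else (if i < 97 then [(1,5),(2,6)] else [(1,5),(1,3),(2,6),(2,4)]))) else (if i < 101 then (if i < 99 then [(1,6),(1,4),(1,2),(1,5),(1,3)] else (if i < 100 then [(1,5),(1,4),(1,2),(1,6),(1,3)] else [(1,6),(1,2),(1,5),(3,4)])) else (if i < 103 then (if i < 102 then [(1,6),(1,3),(2,5),(2,4)] else [(1,5),(2,6),(3,4)]) else (if i < 104 then [(1,5),(1,4),(1,2),(1,6),(1,3)] else [(1,6),(1,3),(2,5),(2,4)])))))))"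

lemma WB6_simps [simp]:
  "WB6 0 = []"
  "WB6 1 = []"
  "WB6 2 = [(1,2)]"
  "WB6 3 = [(3,4)]"
  "WB6 4 = [(1,2),(3,4)]"
  "WB6 5 = [(3,4)]"
  "WB6 6 = []"
  "WB6 7 = [(1,3),(2,4)]"
  "WB6 8 = [(1,5),(1,3),(2,6),(2,4)]"
  "WB6 9 = [(1,3),(2,4)]"
  "WB6 10 = [(1,4),(1,2),(1,3)]"
  "WB6 11 = []"
  "WB6 12 = [(1,4),(2,3)]"
  "WB6 13 = [(3,4)]"
  "WB6 14 = [(1,3),(1,2),(1,4)]"
  "WB6 15 = [(1,6),(1,2),(1,5),(3,4)]"
  "WB6 16 = []"
  "WB6 17 = [(1,2)]"
  "WB6 18 = [(1,3),(1,5),(2,4),(2,6)]"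
  "WB6 19 = []"
  "WB6 20 = [(3,4),(5,6)]"
  "WB6 21 = [(1,4),(1,5),(2,3),(2,6)]"
  "WB6 22 = [(1,2),(3,5),(4,6)]"
  "WB6 23 = [(3,5),(4,6)]"
  "WB6 24 = []"
  "WB6 25 = []"
  "WB6 26 = [(1,2),(3,5),(4,6)]"
  "WB6 27 = [(1,2)]"
  "WB6 28 = [(3,5),(4,6)]"
  "WB6 29 = [(3,5),(4,6)]"
  "WB6 30 = [(1,5),(2,6),(3,4)]"
  "WB6 31 = [(5,6)]"
  "WB6 32 = [(1,2),(5,6)]"
  "WB6 33 = [(1,3),(1,6),(1,2),(1,4),(1,5)]"
  "WB6 34 = [(5,6)]"
  "WB6 35 = [(3,4)]"
  "WB6 36 = [(1,4),(1,6),(1,2),(1,3),(1,5)]"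
  "WB6 37 = [(1,2),(3,6),(3,4),(3,5)]"
  "WB6 38 = [(3,6),(3,4),(3,5)]"
  "WB6 39 = [(5,6)]"
  "WB6 40 = [(5,6)]"
  "WB6 41 = [(1,2),(3,6),(3,4),(3,5)]"
  "WB6 42 = [(1,2),(5,6)]"
  "WB6 43 = [(3,6),(3,4),(3,5)]"
  "WB6 44 = [(3,6),(3,4),(3,5)]"
  "WB6 45 = [(1,6),(1,2),(1,5)]"
  "WB6 46 = [(1,2),(3,4)]"
  "WB6 47 = [(3,4)]"
  "WB6 48 = [(1,3),(1,6),(1,2),(1,4),(1,5)]"
  "WB6 49 = [(1,2),(3,5),(3,4),(3,6)]"
  "WB6 50 = [(3,5),(3,4),(3,6)]"
  "WB6 51 = [(3,4)]"
  "WB6 52 = [(3,4)]"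
  "WB6 53 = [(3,5),(3,4),(3,6)]"
  "WB6 54 = [(3,5),(3,4),(3,6)]"
  "WB6 55 = [(1,2),(3,5),(3,4),(3,6)]"
  "WB6 56 = [(1,2),(3,4)]"
  "WB6 57 = [(1,5),(2,6)]"
  "WB6 58 = [(1,2),(3,4),(5,6)]"
  "WB6 59 = [(3,4),(5,6)]"
  "WB6 60 = [(1,3),(1,5),(2,4),(2,6)]"
  "WB6 61 = [(1,2),(3,6),(4,5)]"
  "WB6 62 = [(3,6),(4,5)]"
  "WB6 63 = [(3,4),(5,6)]"
  "WB6 64 = [(3,4),(5,6)]"
  "WB6 65 = [(3,6),(4,5)]"
  "WB6 66 = [(3,6),(4,5)]"
  "WB6 67 = [(1,2),(3,6),(4,5)]"
  "WB6 68 = [(1,2),(3,4),(5,6)]"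
  "WB6 69 = [(3,5),(4,6)]"
  "WB6 70 = [(1,2),(3,5),(4,6)]"
  "WB6 71 = [(3,5),(4,6)]"
  "WB6 72 = [(3,6),(3,4),(3,5)]"
  "WB6 73 = [(1,2),(3,6),(3,4),(3,5)]"
  "WB6 74 = [(3,6),(3,4),(3,5)]"
  "WB6 75 = [(1,6),(1,4),(2,5),(2,3)]"
  "WB6 76 = [(3,5),(4,6)]"
  "WB6 77 = [(1,5),(1,3),(1,2),(1,6),(1,4)]"
  "WB6 78 = [(3,6),(3,4),(3,5)]"
  "WB6 79 = [(1,5),(1,3),(2,6),(2,4)]"
  "WB6 80 = [(1,6),(1,4),(1,2),(1,5),(1,3)]"
  "WB6 81 = [(1,3),(2,4)]"
  "WB6 82 = [(1,4),(1,2),(1,3)]"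
  "WB6 83 = [(1,4),(1,6),(1,2),(1,3),(1,5)]"
  "WB6 84 = [(1,3),(2,4)]"
  "WB6 85 = [(1,3),(1,5),(2,4),(2,6)]"
  "WB6 86 = [(1,4),(1,2),(1,3)]"
  "WB6 87 = [(1,3),(2,4),(5,6)]"
  "WB6 88 = [(1,4),(1,2),(1,3),(5,6)]"
  "WB6 89 = [(1,4),(1,5),(2,3),(2,6)]"
  "WB6 90 = [(1,3),(2,4),(5,6)]"
  "WB6 91 = [(1,3),(1,6),(1,2),(1,4),(1,5)]"
  "WB6 92 = [(1,4),(1,2),(1,3),(5,6)]"
  "WB6 93 = [(1,5),(1,3),(2,6),(2,4)]"
  "WB6 94 = [(1,6),(1,2),(1,5)]"
  "WB6 95 = [(1,6),(1,4),(1,2),(1,5),(1,3)]"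
  "WB6 96 = [(1,5),(2,6)]"
  "WB6 97 = [(1,5),(1,3),(2,6),(2,4)]"
  "WB6 98 = [(1,6),(1,4),(1,2),(1,5),(1,3)]"
  "WB6 99 = [(1,5),(1,4),(1,2),(1,6),(1,3)]"
  "WB6 100 = [(1,6),(1,2),(1,5),(3,4)]"
  "WB6 101 = [(1,6),(1,3),(2,5),(2,4)]"
  "WB6 102 = [(1,5),(2,6),(3,4)]"
  "WB6 103 = [(1,5),(1,4),(1,2),(1,6),(1,3)]"
  "WB6 104 = [(1,6),(1,3),(2,5),(2,4)]"
  "WB6 (Suc 0) = []"
  by (simp_all add: WB6_def)

definition BB6 :: "nat \<Rightarrow> nat" where
  "BB6 i = (if i < 52 then (if i < 26 then (if i < 13 then (if i < 6 then (if i < 3 then (if i < 1 then 0 else (if i < 2 then 1 else 1)) else (if i < 4 then 0 else (if i < 5 then 1 else 1))) else (if i < 9 then (if i < 7 then 6 else (if i < 8 then 0 else 0)) else (if i < 11 then (if i < 10 then 1 else 1) else (if i < 12 then 11 else 1)))) else (if i < 19 then (if i < 16 then (if i < 14 then 11 else (if i < 15 then 1 else 1)) else (if i < 17 then 16 else (if i < 18 then 16 else 11))) else (if i < 22 then (if i < 20 then 19 else (if i < 21 then 19 else 1)) else (if i < 24 then (if i < 23 then 16 else 16) else (if i < 25 then 24 else 25))))) else (if i < 39 then (if i < 32 then (if i < 29 then (if i < 27 then 25 else (if i < 28 then 25 else 25)) else (if i < 30 then 24 else (if i < 31 then 1 else 16))) else (if i < 35 then (if i < 33 then 16 else (if i <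 34 then 11 else 19)) else (if i < 37 then (if i < 36 then 19 else 1) else (if i < 38 then 16 else 16)))) else (if i < 45 then (if i < 42 then (if i < 40 then 24 else (if i < 41 then 25 else 25)) else (if i < 43 then 25 else (if i < 44 then 25 else 24))) else (if i < 48 then (if i < 46 then 1 else (if i < 47 then 16 else 16)) else (if i < 50 then (if i < 49 then 1 else 16) else (if i < 51 then 16 else 25)))))) else (if i < 78 then (if i < 65 then (if i < 58 then (if i < 55 then (if i < 53 then 24 else (if i < 54 then 25 else 24)) else (if i < 56 then 25 else (if i < 57 then 25 else 1))) else (if i < 61 then (if i < 59 then 16 else (if i < 60 then 16 else 1)) else (if i < 63 then (if i < 62 then 16 else 16) else (if i < 64 then 25 else 24)))) else (if i < 71 then (if i < 68 then (if i < 66 then 25 else (if i < 67 then 24 else 25)) else (if i < 69 then 25 else (if i < 70 then 0 else 1))) else (if i < 74 then (if i < 72 then 1 else (if i < 73 then 0 else 1)) else (if i < 76 then (if i < 75 then 1 else 1) else (if i < 77 then 11 else 1))))) else (if i < 91 then (if i < 84 then (if i < 81 then (if i < 79 then 11 else (if i < 80 then 1 else 1)) else (if i < 82 then 16 else (if i < 83 then 16 else 25))) else (if i < 87 then (if i < 85 then 19 else (if i < 86 then 25 else 19)) else (if i < 89 then (if i < 88 then 16 else 16) else (if i < 90 then 25 else 19)))) else (if i < 98 then (if i < 94 then (if i < 92 then 25 else (if i < 93 then 19 else 19)) else (if i < 96 then (if i < 95 then 25 else 19) else (if i < 97 then 25 else 16))) else (if i < 101 then (if i < 99 then 16 else (if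 i < 100 then 19 else 25)) else (if i < 103 then (if i < 102 then 19 else 25) else (if i < 104 then 16 else 16)))))))"

lemma BB6_simps [simp]:
  "BB6 0 = 0"
  "BB6 1 = 1"
  "BB6 2 = 1"
  "BB6 3 = 0"
  "BB6 4 = 1"
  "BB6 5 = 1"
  "BB6 6 = 6"
  "BB6 7 = 0"
  "BB6 8 = 0"
  "BB6 9 = 1"
  "BB6 10 = 1"
  "BB6 11 = 11"
  "BB6 12 = 1"
  "BB6 13 = 11"
  "BB6 14 = 1"
  "BB6 15 = 1"
  "BB6 16 = 16"
  "BB6 17 = 16"
  "BB6 18 = 11"
  "BB6 19 = 19"
  "BB6 20 = 19"
  "BB6 21 = 1"
  "BB6 22 = 16"
  "BB6 23 = 16"
  "BB6 24 = 24"
  "BB6 25 = 25"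
  "BB6 26 = 25"
  "BB6 27 = 25"
  "BB6 28 = 25"
  "BB6 29 = 24"
  "BB6 30 = 1"
  "BB6 31 = 16"
  "BB6 32 = 16"
  "BB6 33 = 11"
  "BB6 34 = 19"
  "BB6 35 = 19"
  "BB6 36 = 1"
  "BB6 37 = 16"
  "BB6 38 = 16"
  "BB6 39 = 24"
  "BB6 40 = 25"
  "BB6 41 = 25"
  "BB6 42 = 25"
  "BB6 43 = 25"
  "BB6 44 = 24"
  "BB6 45 = 1"
  "BB6 46 = 16"
  "BB6 47 = 16"
  "BB6 48 = 1"
  "BB6 49 = 16"
  "BB6 50 = 16"
  "BB6 51 = 25"
  "BB6 52 = 24"
  "BB6 53 = 25"
  "BB6 54 = 24"
  "BB6 55 = 25"
  "BB6 56 = 25"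
  "BB6 57 = 1"
  "BB6 58 = 16"
  "BB6 59 = 16"
  "BB6 60 = 1"
  "BB6 61 = 16"
  "BB6 62 = 16"
  "BB6 63 = 25"
  "BB6 64 = 24"
  "BB6 65 = 25"
  "BB6 66 = 24"
  "BB6 67 = 25"
  "BB6 68 = 25"
  "BB6 69 = 0"
  "BB6 70 = 1"
  "BB6 71 = 1"
  "BB6 72 = 0"
  "BB6 73 = 1"
  "BB6 74 = 1"
  "BB6 75 = 1"
  "BB6 76 = 11"
  "BB6 77 = 1"
  "BB6 78 = 11"
  "BB6 79 = 1"
  "BB6 80 = 1"
  "BB6 81 = 16"
  "BB6 82 = 16"
  "BB6 83 = 25"
  "BB6 84 = 19"
  "BB6 85 = 25"
  "BB6 86 = 19"
  "BB6 87 = 16"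
  "BB6 88 = 16"
  "BB6 89 = 25"
  "BB6 90 = 19"
  "BB6 91 = 25"
  "BB6 92 = 19"
  "BB6 93 = 19"
  "BB6 94 = 25"
  "BB6 95 = 19"
  "BB6 96 = 25"
  "BB6 97 = 16"
  "BB6 98 = 16"
  "BB6 99 = 19"
  "BB6 100 = 25"
  "BB6 101 = 19"
  "BB6 102 = 25"
  "BB6 103 = 16"
  "BB6 104 = 16"
  "BB6 (Suc 0) = 1"
  by (simp_all add: BB6_def)

lemma LA: "allb (\<lambda>i. okperm 6 (WA i) \<and> seteq (maprel (tp (WA i)) (Tr i)) (Tr (RA i)) \<and> (RA i = 0 \<or> RA i = 6)) 105"
  by (simp add: allb_num okperm_def seteq_def maprel_def tp_def cp_def transpose_def)
definition BR0 :: "nat list" where "BR0 = [0,1,3,4,6,7,9,10,11,16,19,22,24,25,26,46,49,51,52,53,70,76,84]"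
lemma LB0: "allb (\<lambda>i. okperm 6 (WB0 i) \<and> seteq (maprel (tp (WB0 i)) (Tr 0)) (Tr 0) \<and>
     seteq (maprel (tp (WB0 i)) (Tr i)) (Tr (BB0 i)) \<and> BB0 i \<in> set BR0) 105"
  by (simp add: allb_num okperm_def seteq_def maprel_def tp_def cp_def transpose_def BR0_def)
definition BAD0 :: "(nat \<times> nat \<times> nat) list" where "BAD0 = [(16,1,15), (16,15,1)]"
lemma chk0_0: "chkc VV BAD0 105 0 0 105"
  by (simp add: chkc_num chkd_num BAD0_def)
lemma chk0_1: "chkc VV BAD0 105 0 1 105"
  by (simp add: chkc_num chkd_num BAD0_def)
lemma chk0_3: "chkc VV BAD0 105 0 3 105"
  by (simp add: chkc_num chkd_num BAD0_def)
lemma chk0_4: "chkc VV BAD0 105 0 4 105"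
  by (simp add: chkc_num chkd_num BAD0_def)
lemma chk0_6: "chkc VV BAD0 105 0 6 105"
  by (simp add: chkc_num chkd_num BAD0_def)
lemma chk0_7: "chkc VV BAD0 105 0 7 105"
  by (simp add: chkc_num chkd_num BAD0_def)
lemma chk0_9: "chkc VV BAD0 105 0 9 105"
  by (simp add: chkc_num chkd_num BAD0_def)
lemma chk0_10: "chkc VV BAD0 105 0 10 105"
  by (simp add: chkc_num chkd_num BAD0_def)
lemma chk0_11: "chkc VV BAD0 105 0 11 105"
  by (simp add: chkc_num chkd_num BAD0_def)
lemma chk0_16: "chkc VV BAD0 105 0 16 105"
  by (simp add: chkc_num chkd_num BAD0_def)
lemma chk0_19: "chkc VV BAD0 105 0 19 105"
  by (simp add: chkc_num chkd_num BAD0_def)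
lemma chk0_22: "chkc VV BAD0 105 0 22 105"
  by (simp add: chkc_num chkd_num BAD0_def)
lemma chk0_24: "chkc VV BAD0 105 0 24 105"
  by (simp add: chkc_num chkd_num BAD0_def)
lemma chk0_25: "chkc VV BAD0 105 0 25 105"
  by (simp add: chkc_num chkd_num BAD0_def)
lemma chk0_26: "chkc VV BAD0 105 0 26 105"
  by (simp add: chkc_num chkd_num BAD0_def)
lemma chk0_46: "chkc VV BAD0 105 0 46 105"
  by (simp add: chkc_num chkd_num BAD0_def)
lemma chk0_49: "chkc VV BAD0 105 0 49 105"
  by (simp add: chkc_num chkd_num BAD0_def)
lemma chk0_51: "chkc VV BAD0 105 0 51 105"
  by (simp add: chkc_num chkd_num BAD0_def)
lemma chk0_52: "chkc VV BAD0 105 0 52 105"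
  by (simp add: chkc_num chkd_num BAD0_def)
lemma chk0_53: "chkc VV BAD0 105 0 53 105"
  by (simp add: chkc_num chkd_num BAD0_def)
lemma chk0_70: "chkc VV BAD0 105 0 70 105"
  by (simp add: chkc_num chkd_num BAD0_def)
lemma chk0_76: "chkc VV BAD0 105 0 76 105"
  by (simp add: chkc_num chkd_num BAD0_def)
lemma chk0_84: "chkc VV BAD0 105 0 84 105"
  by (simp add: chkc_num chkd_num BAD0_def)
lemma chk0: "\<forall>b\<in>set BR0. chkc VV BAD0 105 0 b 105"
  unfolding BR0_def using chk0_0 chk0_1 chk0_3 chk0_4 chk0_6 chk0_7 chk0_9 chk0_10 chk0_11 chk0_16 chk0_19 chk0_22 chk0_24 chk0_25 chk0_26 chk0_46 chk0_49 chk0_51 chk0_52 chk0_53 chk0_70 chk0_76 chk0_84 by simp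
lemma bw0_0: "okperm 6 [] \<and> m4 (maprel (tp []) (Tr 0)) (maprel (tp []) (Tr 16)) (maprel (tp []) (Tr 1)) (maprel (tp []) (Tr 15))"
  by (simp add: okperm_def m4_def m2_def EL1_def EL2_def EL3_def EL4_def seteq_def maprel_def tp_def cp_def transpose_def)
lemma bw0_1: "okperm 6 [] \<and> m4 (maprel (tp []) (Tr 0)) (maprel (tp []) (Tr 16)) (maprel (tp []) (Tr 15)) (maprel (tp []) (Tr 1))"
  by (simp add: okperm_def m4_def m2_def EL1_def EL2_def EL3_def EL4_def seteq_def maprel_def tp_def cp_def transpose_def)
lemma BW0: "\<forall>(b,c,d)\<in>set BAD0. \<exists>w. okperm 6 w \<and> m4 (maprel (tp w) (Tr 0)) (maprel (tp w) (Tr b)) (maprel (tp w) (Tr c)) (maprel (tp w) (Tr d))"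
  unfolding BAD0_def using bw0_0 bw0_1 by auto
definition BR6 :: "nat list" where "BR6 = [0,1,6,11,16,19,24,25]"
lemma LB6: "allb (\<lambda>i. okperm 6 (WB6 i) \<and> seteq (maprel (tp (WB6 i)) (Tr 6)) (Tr 6) \<and>
     seteq (maprel (tp (WB6 i)) (Tr i)) (Tr (BB6 i)) \<and> BB6 i \<in> set BR6) 105"
  by (simp add: allb_num okperm_def seteq_def maprel_def tp_def cp_def transpose_def BR6_def)
definition BAD6 :: "(nat \<times> nat \<times> nat) list" where "BAD6 = []"
lemma chk6_0: "chkc VV BAD6 105 6 0 105"
  by (simp add: chkc_num chkd_num BAD6_def)
lemma chk6_1: "chkc VV BAD6 105 6 1 105"
  by (simp add: chkc_num chkd_num BAD6_def)
lemma chk6_6: "chkc VV BAD6 105 6 6 105"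
  by (simp add: chkc_num chkd_num BAD6_def)
lemma chk6_11: "chkc VV BAD6 105 6 11 105"
  by (simp add: chkc_num chkd_num BAD6_def)
lemma chk6_16: "chkc VV BAD6 105 6 16 105"
  by (simp add: chkc_num chkd_num BAD6_def)
lemma chk6_19: "chkc VV BAD6 105 6 19 105"
  by (simp add: chkc_num chkd_num BAD6_def)
lemma chk6_24: "chkc VV BAD6 105 6 24 105"
  by (simp add: chkc_num chkd_num BAD6_def)
lemma chk6_25: "chkc VV BAD6 105 6 25 105"
  by (simp add: chkc_num chkd_num BAD6_def)
lemma chk6: "\<forall>b\<in>set BR6. chkc VV BAD6 105 6 b 105"
  unfolding BR6_def using chk6_0 chk6_1 chk6_6 chk6_11 chk6_16 chk6_19 chk6_24 chk6_25 by simp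
lemma BW6: "\<forall>(b,c,d)\<in>set BAD6. \<exists>w. okperm 6 w \<and> m4 (maprel (tp w) (Tr 6)) (maprel (tp w) (Tr b)) (maprel (tp w) (Tr c)) (maprel (tp w) (Tr d))"
  unfolding BAD6_def by simp


lemma bt6: "binary_tree 6 T \<Longrightarrow> \<exists>i<105. T = toT (Tr i)"
proof -
  assume "binary_tree 6 T"
  then obtain zs where zs: "zs \<in> set (TRL 6)" "T = toT zs" using bt_enum[of 6 T] by auto
  then obtain i where "i \<in> set [0,1,2,3,4,5,6,7,8,9,10,11,12,13,14,15,16,17,18,19,20,21,22,23,24,25,26,27,28,29,30,31,32,33,34,35,36,37,38,39,40,41,42,43,44,45,46,47,48,49,50,51,52,53,54,55,56,57,58,59,60,61,62,63,64,65,66,67,68,69,70,71,72,73,74,75,76,77,78,79,80,81,82,83,84,85,86,87,88,89,90,91,92,93,94,95,96,97,98,99,100,101,102,103,104]" "zs = Tr i" and ii: "zs = Tr i"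
    unfolding TRL6_Tr set_map image_iff by blast
  then have "i < 105" using Tr_lt by blast
  then show ?thesis using zs(2) ii by blast
qed

lemma V6: "i < 105 \<Longrightarrow> V 6 (toT (Tr i)) = VV i"
proof -
  assume i: "i < 105"
  have "vec 6 (Tr i) = VV i \<and> list_all (\<lambda>p. distinct (fst p) \<and> distinct (snd p)) (Tr i)"
    using vec6 i unfolding allb_iff by blast
  then show ?thesis using V_toT[of "Tr i" 6] unfolding list_all_iff by simp
qed

lemma reduce:
  assumes LB: "allb (\<lambda>i. okperm 6 (WB i) \<and> seteq (maprel (tp (WB i)) (Tr k)) (Tr k) \<and>
     seteq (maprel (tp (WB i)) (Tr i)) (Tr (BB i)) \<and> BB i \<in> set BR) 105"
  and CH: "\<forall>b\<in>set BR. chkc VV BAD 105 k b 105"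
  and BW: "\<forall>(b,c,d)\<in>set BAD. \<exists>w. okperm 6 w \<and> m4 (maprel (tp w) (Tr k)) (maprel (tp w) (Tr b)) (maprel (tp w) (Tr c)) (maprel (tp w) (Tr d))"
  and BRlt: "\<forall>b\<in>set BR. b < 105" and klt: "k < 105"
  and bt2: "binary_tree 6 S2" and bt3: "binary_tree 6 S3" and bt4: "binary_tree 6 S4"
  and pq: "pq 6 S1 S2 S3 S4" and S1: "S1 = toT (Tr k)" and ne: "{S1, S2} \<noteq> {S3, S4}"
  shows "\<exists>\<sigma>. \<sigma> permutes {1..6} \<and> {{relabel \<sigma> S1, relabel \<sigma> S2}, {relabel \<sigma> S3, relabel \<sigma> S4}} = {{E1, E2}, {E3, E4}}"
proof -
  obtain i2 where i2: "i2 < 105" "S2 = toT (Tr i2)" using bt6[OF bt2] by blast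
  define \<sigma>1 where "\<sigma>1 = tp (WB i2)"
  define b where "b = BB i2"
  have lb: "okperm 6 (WB i2)" "seteq (maprel \<sigma>1 (Tr k)) (Tr k)" "seteq (maprel \<sigma>1 (Tr i2)) (Tr b)" "b \<in> set BR"
    using LB i2(1) unfolding allb_iff \<sigma>1_def b_def by auto
  have p1: "\<sigma>1 permutes {1..6}" unfolding \<sigma>1_def using tp_permutes lb(1) by blast
  have inj1: "inj \<sigma>1" using permutes_inj[OF p1] .
  have U1: "relabel \<sigma>1 S1 = toT (Tr k)" unfolding S1 relabel_toT using seteq_toT lb(2) by blast
  have U2: "relabel \<sigma>1 S2 = toT (Tr b)" unfolding i2(2) relabel_toT using seteq_toT lb(3) by blast
  obtain c where c: "c < 105" "relabel \<sigma>1 S3 = toT (Tr c)" using bt6[OF relabel_binary[OF p1 bt3]] by blast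
  obtain d where d: "d < 105" "relabel \<sigma>1 S4 = toT (Tr d)" using bt6[OF relabel_binary[OF p1 bt4]] by blast
  have blt: "b < 105" using BRlt lb(4) by blast
  have "mc (V 6 (relabel \<sigma>1 S1)) (V 6 (relabel \<sigma>1 S2)) (V 6 (relabel \<sigma>1 S3)) (V 6 (relabel \<sigma>1 S4))"
    using pq_mc[OF pq_relabel[OF p1 pq]] .
  then have mcv: "mc (VV k) (VV b) (VV c) (VV d)" unfolding U1 U2 c(2) d(2) V6[OF klt] V6[OF blt] V6[OF c(1)] V6[OF d(1)] .
  have "chkc VV BAD 105 k b 105" using CH lb(4) by blast
  from chkc_sound[OF this c(1) d(1) mcv]
  have disj: "(k = c \<and> b = d) \<or> (k = d \<and> b = c) \<or> (b, c, d) \<in> set BAD" .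
  have nrel: "{relabel \<sigma>1 S1, relabel \<sigma>1 S2} \<noteq> {relabel \<sigma>1 S3, relabel \<sigma>1 S4}"
  proof
    assume "{relabel \<sigma>1 S1, relabel \<sigma>1 S2} = {relabel \<sigma>1 S3, relabel \<sigma>1 S4}"
    then have "{S1, S2} = {S3, S4}" by (rule pair_inj[OF relabel_inj[OF inj1]])
    then show False using ne by contradiction
  qed
  have "(b, c, d) \<in> set BAD"
  proof (rule ccontr)
    assume "(b, c, d) \<notin> set BAD"
    then have "(k = c \<and> b = d) \<or> (k = d \<and> b = c)" using disj by blast
    then have "{relabel \<sigma>1 S1, relabel \<sigma>1 S2} = {relabel \<sigma>1 S3, relabel \<sigma>1 S4}"
      unfolding U1 U2 c(2) d(2) by (auto simp: insert_commute)
    then show False using nrel by blast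
  qed
  then obtain w where w: "okperm 6 w" "m4 (maprel (tp w) (Tr k)) (maprel (tp w) (Tr b)) (maprel (tp w) (Tr c)) (maprel (tp w) (Tr d))"
    using BW by blast
  have p2: "tp w \<circ> \<sigma>1 permutes {1..6}" using permutes_compose[OF p1 tp_permutes[OF w(1)]] .
  have "{{relabel (tp w \<circ> \<sigma>1) S1, relabel (tp w \<circ> \<sigma>1) S2}, {relabel (tp w \<circ> \<sigma>1) S3, relabel (tp w \<circ> \<sigma>1) S4}} = {{E1, E2}, {E3, E4}}"
    unfolding relabel_comp U1 U2 c(2) d(2) relabel_toT using m4_toT[OF w(2)] .
  then show ?thesis using p2 by blast
qed

lemma part6:
  assumes bt: "binary_tree 6 T1" "binary_tree 6 T2" "binary_tree 6 T3" "binary_tree 6 T4"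
  and m: "quartet_matched 6 T1 T2 T3 T4" and ne: "{T1, T2} \<noteq> {T3, T4}"
  shows "\<exists>\<sigma>. \<sigma> permutes {1..6} \<and>
               {{relabel \<sigma> T1, relabel \<sigma> T2}, {relabel \<sigma> T3, relabel \<sigma> T4}} = {{E1, E2}, {E3, E4}}"
proof -
  obtain i1 where i1: "i1 < 105" "T1 = toT (Tr i1)" using bt6[OF bt(1)] by blast
  define \<sigma>0 where "\<sigma>0 = tp (WA i1)"
  define k where "k = RA i1"
  have la: "okperm 6 (WA i1)" "seteq (maprel \<sigma>0 (Tr i1)) (Tr k)" "k = 0 \<or> k = 6"
    using LA i1(1) unfolding allb_iff \<sigma>0_def k_def by auto
  have p0: "\<sigma>0 permutes {1..6}" unfolding \<sigma>0_def using tp_permutes la(1) by blast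
  have inj0: "inj \<sigma>0" using permutes_inj[OF p0] .
  have S1: "relabel \<sigma>0 T1 = toT (Tr k)" unfolding i1(2) relabel_toT using seteq_toT la(2) by blast
  have pq: "pq 6 (relabel \<sigma>0 T1) (relabel \<sigma>0 T2) (relabel \<sigma>0 T3) (relabel \<sigma>0 T4)"
    using pq_relabel[OF p0 matched_pq[OF m]] .
  have nrel: "{relabel \<sigma>0 T1, relabel \<sigma>0 T2} \<noteq> {relabel \<sigma>0 T3, relabel \<sigma>0 T4}"
  proof
    assume "{relabel \<sigma>0 T1, relabel \<sigma>0 T2} = {relabel \<sigma>0 T3, relabel \<sigma>0 T4}"
    then have "{T1, T2} = {T3, T4}" by (rule pair_inj[OF relabel_inj[OF inj0]])
    then show False using ne by contradiction
  qed
  have bts: "binary_tree 6 (relabel \<sigma>0 T2)" "binary_tree 6 (relabel \<sigma>0 T3)" "binary_tree 6 (relabel \<sigma>0 T4)"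
    using relabel_binary[OF p0] bt by auto
  have BRlt0: "\<forall>b\<in>set BR0. b < 105" by (simp add: BR0_def)
  have BRlt6: "\<forall>b\<in>set BR6. b < 105" by (simp add: BR6_def)
  obtain \<sigma> where \<sigma>: "\<sigma> permutes {1..6}"
    "{{relabel \<sigma> (relabel \<sigma>0 T1), relabel \<sigma> (relabel \<sigma>0 T2)}, {relabel \<sigma> (relabel \<sigma>0 T3), relabel \<sigma> (relabel \<sigma>0 T4)}} = {{E1, E2}, {E3, E4}}"
  proof (cases "k = 0")
    case True
    have k0: "(0::nat) < 105" by simp
    show ?thesis using reduce[OF LB0 chk0 BW0 BRlt0 k0 bts pq S1[unfolded True] nrel] that by blast
  next
    case False
    then have k6: "k = 6" using la(3) by blast
    have k0: "(6::nat) < 105" by simp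
    show ?thesis using reduce[OF LB6 chk6 BW6 BRlt6 k0 bts pq S1[unfolded k6] nrel] that by blast
  qed
  have "(\<sigma> \<circ> \<sigma>0) permutes {1..6}" using permutes_compose[OF p0 \<sigma>(1)] .
  then show ?thesis using \<sigma>(2) unfolding relabel_comp[symmetric] by blast
qed

lemma bt5: "binary_tree 5 T \<Longrightarrow> \<exists>i<15. T = toT (Tr5 i)"
proof -
  assume "binary_tree 5 T"
  then obtain zs where zs: "zs \<in> set (TRL 5)" "T = toT zs" using bt_enum[of 5 T] by auto
  then obtain i where "i \<in> set [0,1,2,3,4,5,6,7,8,9,10,11,12,13,14]" "zs = Tr5 i" and ii: "zs = Tr5 i"
    unfolding TRL5_Tr set_map image_iff by blast
  then have "i < 15" using Tr5_lt by blast
  then show ?thesis using zs(2) ii by blast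
qed

lemma V5: "i < 15 \<Longrightarrow> V 5 (toT (Tr5 i)) = VV5 i"
proof -
  assume i: "i < 15"
  have "vec 5 (Tr5 i) = VV5 i \<and> list_all (\<lambda>p. distinct (fst p) \<and> distinct (snd p)) (Tr5 i)"
    using vec5 i unfolding allb_iff by blast
  then show ?thesis using V_toT[of "Tr5 i" 5] unfolding list_all_iff by simp
qed

lemma part5:
  assumes bt: "binary_tree 5 T1" "binary_tree 5 T2" "binary_tree 5 T3" "binary_tree 5 T4"
  and m: "quartet_matched 5 T1 T2 T3 T4"
  shows "{T1, T2} = {T3, T4}"
proof -
  obtain a where a: "a < 15" "T1 = toT (Tr5 a)" using bt5[OF bt(1)] by blast
  obtain b where b: "b < 15" "T2 = toT (Tr5 b)" using bt5[OF bt(2)] by blast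
  obtain c where c: "c < 15" "T3 = toT (Tr5 c)" using bt5[OF bt(3)] by blast
  obtain d where d: "d < 15" "T4 = toT (Tr5 d)" using bt5[OF bt(4)] by blast
  have "mc (V 5 T1) (V 5 T2) (V 5 T3) (V 5 T4)" using pq_mc[OF matched_pq[OF m]] .
  then have mcv: "mc (VV5 a) (VV5 b) (VV5 c) (VV5 d)" unfolding a(2) b(2) c(2) d(2) V5[OF a(1)] V5[OF b(1)] V5[OF c(1)] V5[OF d(1)] .
  have "chkc VV5 [] 15 a b 15" using chk5 a(1) b(1) unfolding allb_iff by blast
  from chkc_sound[OF this c(1) d(1) mcv]
  have "(a = c \<and> b = d) \<or> (a = d \<and> b = c)" by simp
  then show ?thesis using a b c d by (auto simp: insert_commute)
qed

theorem proposition4: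
  shows "(\<forall>T1 T2 T3 T4. binary_tree 5 T1 \<and> binary_tree 5 T2 \<and> binary_tree 5 T3 \<and>
            binary_tree 5 T4 \<and> quartet_matched 5 T1 T2 T3 T4 \<longrightarrow> {T1, T2} = {T3, T4})
       \<and> (\<forall>T1 T2 T3 T4. binary_tree 6 T1 \<and> binary_tree 6 T2 \<and> binary_tree 6 T3 \<and>
            binary_tree 6 T4 \<and> quartet_matched 6 T1 T2 T3 T4 \<and> {T1, T2} \<noteq> {T3, T4} \<longrightarrow>
            (\<exists>\<sigma>. \<sigma> permutes {1..6} \<and>
               {{relabel \<sigma> T1, relabel \<sigma> T2}, {relabel \<sigma> T3, relabel \<sigma> T4}}
                 = {{E1, E2}, {E3, E4}}))"
  apply (intro conjI allI impI)
   apply (elim conjE, rule part5, assumption+)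
  apply (elim conjE, rule part6, assumption+)
  done


end
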